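(* Let $k\geq 2$ and let $L=(l_1,\dots,l_k)$ be positive integers with $l_1+\dots+l_k=n$ which are generic and reduced. Then the geometric realization of the generalized tonnetz $Tonn^{n,k}(L)$ is homeomorphic to the $(k-1)$-dimensional torus $T^{k-1}=(S^1)^{k-1}$, i.e. $Tonn^{n,k}(L)$ is a triangulation of $T^{k-1}$.
   Context: Elements of $[n]$ are identified with elements of $\mathbb{Z}_n$. $L=(l_1,\dots,l_k)$ is generic if for all subsets $I,J\subseteq[k]$, $\sum_{i\in I}l_i=\sum_{j\in J}l_j$ implies $I=J$. $L$ is reduced if $\gcd(l_1,\dots,l_k)=1$. The generalized tonnetz $Tonn^{n,k}(L)$ is the simplicial complex on vertex set $\mathbb{Z}_n$ whose maximal simplices are the sets $\Delta(x;\sigma)=\{x,\,x+l_{\sigma(1)},\,x+l_{\sigma(1)}+l_{\sigma(2)},\dots,x+l_{\sigma(1)}+\dots+l_{\sigma(k-1)}\}$ (sums in $\mathbb{Z}_n$), for $x\in\mathbb{Z}_n$ and $\sigma\in S_k$; its simplices are all subsets of these sets. *)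

theory Defs
  imports "HOL-Analysis.Analysis" "HOL-Combinatorics.Permutations"
begin

text \<open>Indices of L are 0..k-1 (L i is the paper's l_(i+1)); vertices of Z_n are 0..n-1.\<close>

definition generic :: "nat \<Rightarrow> (nat \<Rightarrow> nat) \<Rightarrow> bool" where
  "generic k L \<longleftrightarrow> (\<forall>I J. I \<subseteq> {..<k} \<longrightarrow> J \<subseteq> {..<k} \<longrightarrow>
      (\<Sum>i\<in>I. L i) = (\<Sum>j\<in>J. L j) \<longrightarrow> I = J)"

definition reduced :: "nat \<Rightarrow> (nat \<Rightarrow> nat) \<Rightarrow> bool" where
  "reduced k L \<longleftrightarrow> Gcd (L ` {..<k}) = 1"

definition tonnetz_simplex :: "nat \<Rightarrow> nat \<Rightarrow> (nat \<Rightarrow> nat) \<Rightarrow> nat \<Rightarrow> (nat \<Rightarrow> nat) \<Rightarrow> nat set" where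
  "tonnetz_simplex n k L x \<sigma> = {(x + (\<Sum>j<i. L (\<sigma> j))) mod n | i. i < k}"

definition tonnetz :: "nat \<Rightarrow> nat \<Rightarrow> (nat \<Rightarrow> nat) \<Rightarrow> nat set set" where
  "tonnetz n k L = {S. \<exists>x<n. \<exists>\<sigma>. \<sigma> permutes {..<k} \<and> S \<subseteq> tonnetz_simplex n k L x \<sigma>}"

text \<open>Geometric realization of a (finite) simplicial complex K with vertices in nat:
  barycentric-coordinate functions supported on a simplex, in the product (Euclidean) topology.\<close>
definition geometric_realization :: "nat set set \<Rightarrow> (nat \<Rightarrow> real) set" where
  "geometric_realization K = {f. \<exists>S\<in>K. finite S \<and> (\<forall>v. 0 \<le> f v) \<and> (\<forall>v. v \<notin> S \<longrightarrow> f v = 0)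
        \<and> (\<Sum>v\<in>S. f v) = 1}"

definition torus :: "nat \<Rightarrow> (nat \<Rightarrow> complex) set" where
  "torus m = {g. (\<forall>i<m. g i \<in> sphere 0 1) \<and> (\<forall>i\<ge>m. g i = 0)}"

end

theory Submission
  imports Defs
begin



lemma coord_cont [continuous_intros]: "continuous_on S (\<lambda>z. z i :: 'b::topological_space)"
  by (rule continuous_on_subset[OF continuous_on_product_coordinates]) simp

lemma torus_shift:
  assumes "k \<ge> 1"
  shows "{z\<in>torus k. z 0 = 1} homeomorphic torus (k - 1)"
proof -
  define f where "f = (\<lambda>(z::nat\<Rightarrow>complex) i. z (Suc i))"
  define g where "g = (\<lambda>(y::nat\<Rightarrow>complex) i. if i = 0 then 1 else y (i - 1))"
  have "homeomorphism {z\<in>torus k. z 0 = 1} (torus (k - 1)) f g"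
  proof (rule homeomorphismI)
    show "continuous_on {z \<in> torus k. z 0 = 1} f"
      unfolding f_def by (intro continuous_on_coordinatewise_then_product coord_cont)
    show "continuous_on (torus (k - 1)) g"
      unfolding g_def
    proof (intro continuous_on_coordinatewise_then_product)
      fix i show "continuous_on (torus (k - 1)) (\<lambda>x. if i = 0 then 1 else x (i - 1))"
        by (cases "i = 0") (auto intro!: coord_cont)
    qed
    show "f ` {z \<in> torus k. z 0 = 1} \<subseteq> torus (k - 1)"
      using assms by (auto simp: f_def torus_def)
    show "g ` torus (k - 1) \<subseteq> {z \<in> torus k. z 0 = 1}"
      using assms by (auto simp: g_def torus_def)
    show "g (f x) = x" if "x \<in> {z \<in> torus k. z 0 = 1}" for x
      using that by (auto simp: f_def g_def fun_eq_iff)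
    show "f (g y) = y" for y
      by (auto simp: f_def g_def fun_eq_iff)
  qed
  then show ?thesis unfolding homeomorphic_def by blast
qed

lemma torus_swap:
  assumes "m < k" "j < k"
  shows "{z\<in>torus k. z m = 1} homeomorphic {z\<in>torus k. z j = 1}"
proof -
  define f where "f = (\<lambda>(z::nat\<Rightarrow>complex). z \<circ> Transposition.transpose m j)"
  have inv: "f (f z) = z" for z by (auto simp: f_def fun_eq_iff)
  have tk: "Transposition.transpose m j i < k \<longleftrightarrow> i < k" for i
    using assms by (auto simp: Transposition.transpose_def split: if_splits)
  have tk2: "i \<ge> k \<Longrightarrow> Transposition.transpose m j i = i" for i
    using assms by (auto simp: Transposition.transpose_def)
  have tr: "f z \<in> torus k" if "z \<in> torus k" for z
    using that tk tk2 by (auto simp: f_def torus_def)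
  have "homeomorphism {z\<in>torus k. z m = 1} {z\<in>torus k. z j = 1} f f"
  proof (rule homeomorphismI)
    show "continuous_on {z \<in> torus k. z m = 1} f" "continuous_on {z \<in> torus k. z j = 1} f"
      unfolding f_def o_def
      by (auto intro!: continuous_on_coordinatewise_then_product coord_cont)
    show "f ` {z \<in> torus k. z m = 1} \<subseteq> {z \<in> torus k. z j = 1}"
      using tr by (auto simp: f_def)
    show "f ` {z \<in> torus k. z j = 1} \<subseteq> {z \<in> torus k. z m = 1}"
      using tr by (auto simp: f_def)
  qed (auto simp: inv)
  then show ?thesis unfolding homeomorphic_def by blast
qed

definition chi :: "nat \<Rightarrow> (nat \<Rightarrow> int) \<Rightarrow> (nat \<Rightarrow> complex) \<Rightarrow> complex" where
  "chi k l z = (\<Prod>m<k. z m powi l m)"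

definition ZL :: "nat \<Rightarrow> (nat \<Rightarrow> int) \<Rightarrow> (nat \<Rightarrow> complex) set" where
  "ZL k l = {z\<in>torus k. chi k l z = 1}"

lemma torus_nz: "z \<in> torus k \<Longrightarrow> i < k \<Longrightarrow> z i \<noteq> 0"
  by (auto simp: torus_def)

lemma torus_norm: "z \<in> torus k \<Longrightarrow> i < k \<Longrightarrow> norm (z i) = 1"
  by (auto simp: torus_def)

definition shear :: "nat \<Rightarrow> nat \<Rightarrow> int \<Rightarrow> (nat \<Rightarrow> complex) \<Rightarrow> (nat \<Rightarrow> complex)" where
  "shear i j c z = z(j := z j * z i powi c)"

lemma shear_torus:
  assumes "z \<in> torus k" "i < k" "j < k" "i \<noteq> j"
  shows "shear i j c z \<in> torus k"
  using assms by (auto simp: torus_def shear_def norm_mult norm_power_int)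

lemma shear_inv:
  assumes "z \<in> torus k" "i < k" "j < k" "i \<noteq> j"
  shows "shear i j (-c) (shear i j c z) = z"
proof -
  have "z i \<noteq> 0" using assms torus_nz by blast
  then have "z i powi c * z i powi (-c) = 1"
    by (simp add: power_int_minus field_simps)
  then show ?thesis using assms by (auto simp: shear_def fun_eq_iff mult.assoc)
qed

lemma shear_cont:
  assumes "i < k"
  shows "continuous_on (torus k) (shear i j c)"
  unfolding shear_def
proof (intro continuous_on_coordinatewise_then_product)
  fix m
  show "continuous_on (torus k) (\<lambda>x. (x(j := x j * x i powi c)) m)"
  proof (cases "m = j")
    case True
    then show ?thesis
      using assms
      by (auto intro!: continuous_on_mult coord_cont continuous_on_power_int dest: torus_nz)
  next
    case False
    then show ?thesis
      by (auto intro!: coord_cont)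
  qed
qed

lemma chi_shear:
  assumes "z \<in> torus k" "i < k" "j < k" "i \<noteq> j"
  shows "chi k l (shear i j c z) = chi k (l(i := l i + c * l j)) z"
proof -
  have nz: "z i \<noteq> 0" using assms torus_nz by blast
  have "chi k l (shear i j c z) = (\<Prod>m<k. z m powi l m * (if m = j then z i powi (c * l j) else 1))"
    unfolding chi_def shear_def
  proof (rule prod.cong)
    fix m assume "m \<in> {..<k}"
    show "(z(j := z j * z i powi c)) m powi l m = z m powi l m * (if m = j then z i powi (c * l j) else 1)"
    proof (cases "m = j")
      case True
      have "(z j * z i powi c) powi l j = z j powi l j * (z i powi c) powi l j"
        by (rule power_int_mult_distrib)
      also have "(z i powi c) powi l j = z i powi (c * l j)"
        by (rule power_int_mult[symmetric])
      finally show ?thesis using True by simp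
    qed simp
  qed simp
  also have "\<dots> = chi k l z * z i powi (c * l j)"
    using assms by (simp add: prod.distrib chi_def prod.delta)
  also have "\<dots> = (\<Prod>m<k. z m powi l m * (if m = i then z i powi (c * l j) else 1))"
    using assms by (simp add: prod.distrib chi_def prod.delta)
  also have "\<dots> = chi k (l(i := l i + c * l j)) z"
    unfolding chi_def
  proof (rule prod.cong)
    fix m assume "m \<in> {..<k}"
    show "z m powi l m * (if m = i then z i powi (c * l j) else 1) = z m powi (l(i := l i + c * l j)) m"
    proof (cases "m = i")
      case True
      then show ?thesis using power_int_add[of "z i" "l i" "c * l j"] nz by simp
    qed simp
  qed simp
  finally show ?thesis .
qed

lemma ZL_shear:
  assumes "i < k" "j < k" "i \<noteq> j"
  shows "ZL k (l(i := l i + c * l j)) homeomorphic ZL k l"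
proof -
  let ?l' = "l(i := l i + c * l j)"
  have h: "homeomorphism (torus k) (torus k) (shear i j c) (shear i j (-c))"
  proof (rule homeomorphismI)
    show "continuous_on (torus k) (shear i j c)" "continuous_on (torus k) (shear i j (-c))"
      using assms shear_cont by auto
    show "shear i j c ` torus k \<subseteq> torus k" "shear i j (- c) ` torus k \<subseteq> torus k"
      using assms shear_torus by auto
    show "shear i j (- c) (shear i j c x) = x" if "x \<in> torus k" for x
      using that assms shear_inv by blast
    show "shear i j c (shear i j (- c) y) = y" if "y \<in> torus k" for y
      using that assms shear_inv[of y k i j "-c"] by simp
  qed
  have im: "shear i j c ` ZL k ?l' = ZL k l"
  proof
    show "shear i j c ` ZL k ?l' \<subseteq> ZL k l"
      using assms by (auto simp: ZL_def chi_shear shear_torus)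
    show "ZL k l \<subseteq> shear i j c ` ZL k ?l'"
    proof
      fix y assume y: "y \<in> ZL k l"
      then have yt: "y \<in> torus k" by (simp add: ZL_def)
      have e: "shear i j c (shear i j (-c) y) = y" using yt assms shear_inv[of y k i j "-c"] by simp
      have "shear i j (-c) y \<in> torus k" using yt assms shear_torus by blast
      moreover have "chi k ?l' (shear i j (-c) y) = 1"
        using chi_shear[OF \<open>shear i j (-c) y \<in> torus k\<close> assms, of l c, symmetric] e y
        by (simp add: ZL_def)
      ultimately show "y \<in> shear i j c ` ZL k ?l'"
        using e by (metis (mono_tags, lifting) ZL_def image_eqI mem_Collect_eq)
    qed
  qed
  then have "homeomorphism (ZL k ?l') (ZL k l) (shear i j c) (shear i j (-c))"
    by (intro homeomorphism_of_subsets[OF h _ _ im]) (auto simp: ZL_def)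
  then show ?thesis unfolding homeomorphic_def by blast
qed

lemma ZL_single:
  assumes "m0 < k" "\<And>m. m < k \<Longrightarrow> m \<noteq> m0 \<Longrightarrow> l m = 0" "l m0 = 1 \<or> l m0 = -1"
  shows "ZL k l = {z\<in>torus k. z m0 = 1}"
proof -
  have "chi k l z = z m0 powi l m0" for z :: "nat \<Rightarrow> complex"
  proof -
    have "chi k l z = (\<Prod>m<k. if m = m0 then z m0 powi l m0 else 1)"
      unfolding chi_def by (rule prod.cong) (auto simp: assms(2))
    then show ?thesis using assms(1) by simp
  qed
  moreover have "z m0 powi l m0 = 1 \<longleftrightarrow> z m0 = 1" for z :: "nat \<Rightarrow> complex"
    using assms(3) by (auto simp: power_int_minus1_right power_int_1_right power_int_1_left)
  ultimately show ?thesis by (auto simp: ZL_def)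
qed

lemma ZL_reduce:
  assumes "k \<ge> 1"
  shows "(\<Sum>m<k. l m * w m) = 1 \<Longrightarrow> ZL k l homeomorphic {z\<in>torus k. z 0 = 1}"
proof (induction "\<Sum>m<k. nat \<bar>l m\<bar>" arbitrary: l w rule: less_induct)
  case less
  show ?case
  proof (cases "\<exists>i j. i < k \<and> j < k \<and> i \<noteq> j \<and> l i \<noteq> 0 \<and> l j \<noteq> 0 \<and> \<bar>l j\<bar> \<le> \<bar>l i\<bar>")
    case True
    then obtain i j where ij: "i < k" "j < k" "i \<noteq> j" "l i \<noteq> 0" "l j \<noteq> 0" "\<bar>l j\<bar> \<le> \<bar>l i\<bar>"
      by blast
    define c where "c = - (sgn (l i) * sgn (l j))"
    define l' where "l' = l(i := l i + c * l j)"
    define w' where "w' = w(j := w j - c * w i)"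
    have li': "l' i = sgn (l i) * (\<bar>l i\<bar> - \<bar>l j\<bar>)"
      using ij unfolding l'_def c_def
      by (cases "l i > 0"; cases "l j > 0") (auto simp: sgn_if abs_if algebra_simps)
    have ab: "\<bar>l' i\<bar> < \<bar>l i\<bar>"
      using ij li' by (auto simp: abs_mult abs_sgn_eq)
    have "(\<Sum>m<k. nat \<bar>l' m\<bar>) = (\<Sum>m<k. nat \<bar>l m\<bar>) - nat \<bar>l i\<bar> + nat \<bar>l' i\<bar>"
    proof -
      have "(\<Sum>m<k. nat \<bar>l' m\<bar>) = nat \<bar>l' i\<bar> + (\<Sum>m\<in>{..<k}-{i}. nat \<bar>l' m\<bar>)"
        using ij by (simp add: sum.remove)
      moreover have "(\<Sum>m<k. nat \<bar>l m\<bar>) = nat \<bar>l i\<bar> + (\<Sum>m\<in>{..<k}-{i}. nat \<bar>l m\<bar>)"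
        using ij by (simp add: sum.remove)
      moreover have "(\<Sum>m\<in>{..<k}-{i}. nat \<bar>l' m\<bar>) = (\<Sum>m\<in>{..<k}-{i}. nat \<bar>l m\<bar>)"
        by (rule sum.cong) (auto simp: l'_def)
      ultimately show ?thesis by simp
    qed
    then have lt: "(\<Sum>m<k. nat \<bar>l' m\<bar>) < (\<Sum>m<k. nat \<bar>l m\<bar>)"
    proof -
      have "nat \<bar>l i\<bar> \<le> (\<Sum>m<k. nat \<bar>l m\<bar>)"
        using ij by (intro member_le_sum) auto
      then show ?thesis using \<open>(\<Sum>m<k. nat \<bar>l' m\<bar>) = _\<close> ab by linarith
    qed
    have sw: "(\<Sum>m<k. l' m * w' m) = 1"
    proof -
      have "l' m * w' m = l m * w m + (if m = i then c * l j * w i else 0) - (if m = j then c * l j * w i else 0)" for m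
        using ij by (auto simp: l'_def w'_def algebra_simps)
      then have "(\<Sum>m<k. l' m * w' m) = (\<Sum>m<k. l m * w m + (if m = i then c * l j * w i else 0) - (if m = j then c * l j * w i else 0))"
        by simp
      also have "\<dots> = (\<Sum>m<k. l m * w m)"
        using ij by (simp add: sum.distrib sum_subtractf)
      finally show ?thesis using less.prems by simp
    qed
    have "ZL k l' homeomorphic {z\<in>torus k. z 0 = 1}"
      using less.hyps[OF lt sw] .
    moreover have "ZL k l' homeomorphic ZL k l"
      unfolding l'_def using ZL_shear[OF ij(1,2,3)] .
    ultimately show ?thesis
      using homeomorphic_sym homeomorphic_trans by blast
  next
    case False
    have ex: "\<exists>m0<k. l m0 \<noteq> 0"
    proof (rule ccontr)
      assume "\<not> ?thesis"
      then have "(\<Sum>m<k. l m * w m) = 0" by simp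
      then show False using less.prems by simp
    qed
    then obtain m0 where m0: "m0 < k" "l m0 \<noteq> 0" by blast
    have oth: "l m = 0" if "m < k" "m \<noteq> m0" for m
    proof (rule ccontr)
      assume "l m \<noteq> 0"
      then show False
        using False m0 that by (cases "\<bar>l m\<bar> \<le> \<bar>l m0\<bar>") (metis linorder_le_cases)+
    qed
    have "(\<Sum>m<k. l m * w m) = (\<Sum>m<k. if m = m0 then l m0 * w m0 else 0)"
      by (rule sum.cong) (auto simp: oth)
    then have "l m0 * w m0 = 1" using less.prems m0 by simp
    then have "l m0 = 1 \<or> l m0 = -1" using pos_zmult_eq_1_iff_lemma by blast
    then have "ZL k l = {z\<in>torus k. z m0 = 1}"
      using ZL_single[of m0 k l] m0(1) oth by blast
    then show ?thesis using torus_swap[OF m0(1), of 0] assms by simp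
  qed
qed


lemma bez: fixes k :: nat and L :: "nat \<Rightarrow> nat" shows "\<exists>w. (\<Sum>m<k. int (L m) * w m) = int (Gcd (L ` {..<k}))"
proof (induction k)
  case 0
  then show ?case by simp
next
  case (Suc k)
  then obtain w where w: "(\<Sum>m<k. int (L m) * w m) = int (Gcd (L ` {..<k}))" by blast
  obtain u v where uv: "u * int (L k) + v * int (Gcd (L ` {..<k})) = gcd (int (L k)) (int (Gcd (L ` {..<k})))"
    using bezout_int by blast
  define w' where "w' = (\<lambda>m. if m = k then u else v * w m)"
  have "(\<Sum>m<Suc k. int (L m) * w' m) = u * int (L k) + v * (\<Sum>m<k. int (L m) * w m)"
    by (simp add: w'_def sum_distrib_left algebra_simps)
  also have "\<dots> = int (gcd (L k) (Gcd (L ` {..<k})))" using uv w by (simp add: gcd_int_int_eq)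
  also have "gcd (L k) (Gcd (L ` {..<k})) = Gcd (L ` {..<Suc k})"
    by (simp add: lessThan_Suc)
  finally show ?case by blast
qed



definition spread :: "nat \<Rightarrow> (nat \<Rightarrow> real) \<Rightarrow> real" where
  "spread k y = Max ((\<lambda>(a, b). y a - y b) ` ({..<k} \<times> {..<k}))"

lemma spread_ge: "a < k \<Longrightarrow> b < k \<Longrightarrow> y a - y b \<le> spread k y"
  unfolding spread_def by (rule Max_ge) force+

lemma spread_le: "0 < k \<Longrightarrow> (\<And>a b. a < k \<Longrightarrow> b < k \<Longrightarrow> y a - y b \<le> v) \<Longrightarrow> spread k y \<le> v"
  unfolding spread_def by (subst Max_le_iff) force+

lemma spread_eqI: "a < k \<Longrightarrow> b < k \<Longrightarrow> y a - y b = v \<Longrightarrow> (\<And>a b. a < k \<Longrightarrow> b < k \<Longrightarrow> y a - y b \<le> v) \<Longrightarrow> spread k y = v"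
  using spread_ge[of a k b y] spread_le[of k y v] by fastforce

lemma spread_shift: "spread k (\<lambda>m. y m + c) = spread k y"
  unfolding spread_def by (simp add: case_prod_beta)

lemma spread_perm:
  assumes "\<sigma> permutes {..<k}"
  shows "spread k (\<lambda>p. y (\<sigma> p)) = spread k y"
proof -
  have im: "(\<lambda>(a, b). (\<sigma> a, \<sigma> b)) ` ({..<k} \<times> {..<k}) = {..<k} \<times> {..<k}"
  proof
    show "(\<lambda>(a, b). (\<sigma> a, \<sigma> b)) ` ({..<k} \<times> {..<k}) \<subseteq> {..<k} \<times> {..<k}"
      using permutes_in_image[OF assms] by auto
    show "{..<k} \<times> {..<k} \<subseteq> (\<lambda>(a, b). (\<sigma> a, \<sigma> b)) ` ({..<k} \<times> {..<k})"
    proof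
      fix z assume "z \<in> {..<k} \<times> {..<k}"
      then obtain a b where z: "z = (a, b)" "a < k" "b < k" by auto
      have "inv \<sigma> a < k" "inv \<sigma> b < k"
        using z permutes_in_image[OF permutes_inv[OF assms]] by auto
      moreover have "z = (\<sigma> (inv \<sigma> a), \<sigma> (inv \<sigma> b))"
        using z permutes_inverses(1)[OF assms] by simp
      ultimately show "z \<in> (\<lambda>(a, b). (\<sigma> a, \<sigma> b)) ` ({..<k} \<times> {..<k})" by force
    qed
  qed
  have "(\<lambda>(a, b). y (\<sigma> a) - y (\<sigma> b)) ` ({..<k} \<times> {..<k})
      = (\<lambda>(a, b). y a - y b) ` ((\<lambda>(a, b). (\<sigma> a, \<sigma> b)) ` ({..<k} \<times> {..<k}))"
    by (simp add: image_image case_prod_beta)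
  then show ?thesis unfolding spread_def im by simp
qed

definition Qp :: "(nat \<Rightarrow> real) \<Rightarrow> nat \<Rightarrow> nat \<Rightarrow> real" where
  "Qp t k p = (\<Sum>i\<in>{p<..<k}. t i)"

locale wts =
  fixes t :: "nat \<Rightarrow> real" and k :: nat
  assumes tnn: "\<And>i. 0 \<le> t i" and tsum: "(\<Sum>i<k. t i) = 1"
begin

lemma kpos: "k > 0"
  using tsum by (cases k) auto

lemma sub_le1: "A \<subseteq> {..<k} \<Longrightarrow> sum t A \<le> 1"
  using sum_mono2[of "{..<k}" A t] tnn tsum by auto

lemma sub_le: "A \<subseteq> {..<k} \<Longrightarrow> j < k \<Longrightarrow> j \<notin> A \<Longrightarrow> sum t A \<le> 1 - t j"
proof -
  assume h: "A \<subseteq> {..<k}" "j < k" "j \<notin> A"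
  have "sum t (insert j A) \<le> 1" using h by (intro sub_le1) auto
  moreover have "finite A" using h finite_subset by blast
  ultimately show ?thesis using h by simp
qed

lemma mem_ge: "finite A \<Longrightarrow> j \<in> A \<Longrightarrow> t j \<le> sum t A"
  using member_le_sum[of j A t] tnn by auto

lemma Q_diff: "a \<le> b \<Longrightarrow> Qp t k a - Qp t k b = sum t {a<..b}" if "b < k"
proof -
  assume "a \<le> b"
  have "{a<..<k} = {a<..b} \<union> {b<..<k}" using that \<open>a \<le> b\<close> by auto
  then have "Qp t k a = sum t {a<..b} + sum t {b<..<k}"
    unfolding Qp_def by (simp add: sum.union_disjoint ivl_disj_int)
  then show ?thesis unfolding Qp_def by simp
qed

lemma Q_le1: "Qp t k a \<le> 1"
  unfolding Qp_def by (rule sub_le1) auto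

lemma Q_nn: "0 \<le> Qp t k a"
  unfolding Qp_def using tnn by (simp add: sum_nonneg)

lemma Q_last: "Qp t k (k - 1) = 0"
proof -
  have "{k - 1<..<k} = {}" by auto
  then show ?thesis unfolding Qp_def by simp
qed

lemma Q_first: "Qp t k 0 = 1 - t 0"
proof -
  have "{..<k} = insert 0 {0<..<k}" using kpos by auto
  then have "(\<Sum>i<k. t i) = t 0 + Qp t k 0" unfolding Qp_def by simp
  then show ?thesis using tsum by simp
qed

lemma Q_mono: "a \<le> b \<Longrightarrow> b < k \<Longrightarrow> Qp t k b \<le> Qp t k a"
proof -
  assume h: "a \<le> b" "b < k"
  have "0 \<le> sum t {a<..b}" by (simp add: sum_nonneg tnn)
  then show ?thesis using Q_diff[OF h(2) h(1)] by linarith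
qed

lemma S1:
  assumes "j < k"
  shows "spread k (\<lambda>p. Qp t k p - of_int (if p < j then 1 else 0)) = 1 - t j"
proof -
  let ?y = "\<lambda>p. Qp t k p - of_int (if p < j then 1 else 0)"
  have bound: "?y a - ?y b \<le> 1 - t j" if "a < k" "b < k" for a b
  proof (cases "a \<le> b")
    case True
    note d = Q_diff[OF \<open>b < k\<close> True]
    show ?thesis
    proof (cases "a < j")
      case True
      show ?thesis
      proof (cases "b < j")
        case True
        have "sum t {a<..b} \<le> 1 - t j" using \<open>b < j\<close> \<open>b < k\<close> assms by (intro sub_le) auto
        then show ?thesis using d \<open>a < j\<close> True by simp
      next
        case False
        have "sum t {a<..b} \<le> 1" using \<open>b < k\<close> by (intro sub_le1) auto
        moreover have "t j \<le> 1" using sub_le1[of "{j}"] assms by simp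
        ultimately show ?thesis using d \<open>a < j\<close> False by auto
      qed
    next
      case False
      have "sum t {a<..b} \<le> 1 - t j" using False \<open>b < k\<close> assms by (intro sub_le) auto
      then show ?thesis using d False \<open>a \<le> b\<close> by auto
    qed
  next
    case False
    then have ba: "b \<le> a" by simp
    note d = Q_diff[OF \<open>a < k\<close> ba]
    show ?thesis
    proof (cases "b < j \<and> \<not> a < j")
      case True
      have "t j \<le> sum t {b<..a}" using True by (intro mem_ge) auto
      then show ?thesis using d True by auto
    next
      case False
      have "0 \<le> sum t {b<..a}" using tnn by (simp add: sum_nonneg)
      moreover have "t j \<le> 1" using sub_le1[of "{j}"] assms by simp
      ultimately show ?thesis using d False ba by auto
    qed
  qed
  show ?thesis
  proof (cases "j = 0")
    case True
    have "?y 0 - ?y (k - 1) = 1 - t j" using True Q_first Q_last by simp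
    then show ?thesis using kpos bound by (intro spread_eqI[of 0 k "k - 1"]) auto
  next
    case False
    have "{j - 1<..j} = {j}" using False by auto
    then have "Qp t k (j - 1) - Qp t k j = t j" using Q_diff[OF assms, of "j - 1"] by simp
    then have "?y j - ?y (j - 1) = 1 - t j" using False by simp
    then show ?thesis using assms bound by (intro spread_eqI[of j k "j - 1"]) auto
  qed
qed

lemma S2:
  assumes "spread k (\<lambda>p. Qp t k p - of_int (\<beta> p)) < 1"
  shows "\<exists>j<k. \<exists>r. \<forall>p<k. \<beta> p = (if p < j then 1 else 0) + r"
proof -
  let ?y = "\<lambda>p. Qp t k p - of_int (\<beta> p)"
  have step: "\<beta> b \<le> \<beta> a \<and> \<beta> a \<le> \<beta> b + 1" if "a \<le> b" "b < k" for a b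
  proof -
    have "?y a - ?y b < 1" "?y b - ?y a < 1"
      using spread_ge[of a k b ?y] spread_ge[of b k a ?y] assms that by auto
    moreover have "0 \<le> Qp t k a - Qp t k b" "Qp t k a - Qp t k b \<le> 1"
      using Q_mono[OF that] Q_le1[of a] Q_nn[of b] by auto
    ultimately have "real_of_int (\<beta> a - \<beta> b) > -1" "real_of_int (\<beta> a - \<beta> b) < 2" by auto
    then have "\<beta> a - \<beta> b > -1" "\<beta> a - \<beta> b < 2" by linarith+
    then show ?thesis by linarith
  qed
  define r where "r = \<beta> (k - 1)"
  have ex: "\<exists>p. p < k \<and> \<beta> p = r" using kpos r_def by (intro exI[of _ "k - 1"]) auto
  define j where "j = (LEAST p. p < k \<and> \<beta> p = r)"
  have j: "j < k" "\<beta> j = r" using LeastI_ex[OF ex] unfolding j_def by auto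
  have below: "\<beta> p = r + 1" if "p < j" for p
  proof -
    have "\<not> (p < k \<and> \<beta> p = r)" using not_less_Least[OF that[unfolded j_def]] .
    then have "\<beta> p \<noteq> r" using that j by auto
    moreover have "\<beta> p \<le> \<beta> (k - 1) + 1" "\<beta> (k - 1) \<le> \<beta> p"
      using step[of p "k - 1"] that j kpos by auto
    ultimately show ?thesis unfolding r_def by linarith
  qed
  have above: "\<beta> p = r" if "j \<le> p" "p < k" for p
    using step[OF that] step[of p "k - 1"] that j unfolding r_def by auto
  show ?thesis
    by (rule exI[of _ j], use j in simp, rule exI[of _ r]) (use below above in auto)
qed

end



definition Ssum :: "(nat \<Rightarrow> nat) \<Rightarrow> (nat \<Rightarrow> nat) \<Rightarrow> nat \<Rightarrow> nat" where
  "Ssum L \<sigma> i = (\<Sum>j<i. L (\<sigma> j))"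

definition vert :: "nat \<Rightarrow> (nat \<Rightarrow> nat) \<Rightarrow> nat \<Rightarrow> (nat \<Rightarrow> nat) \<Rightarrow> nat \<Rightarrow> nat" where
  "vert n L x \<sigma> i = (x + Ssum L \<sigma> i) mod n"

definition ind :: "(nat \<Rightarrow> nat) \<Rightarrow> nat \<Rightarrow> nat \<Rightarrow> int" where
  "ind \<sigma> i m = (if m \<in> \<sigma> ` {..<i} then 1 else 0)"

definition cell :: "nat \<Rightarrow> nat \<Rightarrow> (nat \<Rightarrow> nat) \<Rightarrow> nat \<Rightarrow> (nat \<Rightarrow> nat) \<Rightarrow> (nat \<Rightarrow> real) set" where
  "cell n k L x \<sigma> = {f. (\<forall>v. 0 \<le> f v) \<and> (\<forall>v. v \<notin> tonnetz_simplex n k L x \<sigma> \<longrightarrow> f v = 0)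
      \<and> sum f (tonnetz_simplex n k L x \<sigma>) = 1}"

definition qv :: "nat \<Rightarrow> nat \<Rightarrow> (nat \<Rightarrow> nat) \<Rightarrow> nat \<Rightarrow> (nat \<Rightarrow> nat) \<Rightarrow> (nat \<Rightarrow> real) \<Rightarrow> nat \<Rightarrow> real" where
  "qv n k L x \<sigma> f m = (\<Sum>i<k. f (vert n L x \<sigma> i) * of_int (ind \<sigma> i m))"

definition psi :: "nat \<Rightarrow> nat \<Rightarrow> (nat \<Rightarrow> nat) \<Rightarrow> nat \<Rightarrow> (nat \<Rightarrow> nat) \<Rightarrow> (nat \<Rightarrow> real) \<Rightarrow> nat \<Rightarrow> real" where
  "psi n k L x \<sigma> f m = qv n k L x \<sigma> f m
     - ((\<Sum>m'<k. real (L m') * qv n k L x \<sigma> f m') + real x) / real n"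

definition Psi :: "nat \<Rightarrow> nat \<Rightarrow> (nat \<Rightarrow> nat) \<Rightarrow> nat \<Rightarrow> (nat \<Rightarrow> nat) \<Rightarrow> (nat \<Rightarrow> real) \<Rightarrow> nat \<Rightarrow> complex" where
  "Psi n k L x \<sigma> f = (\<lambda>m. if m < k then cis (2 * pi * psi n k L x \<sigma> f m) else 0)"

locale tonn =
  fixes n k :: nat and L :: "nat \<Rightarrow> nat"
  assumes k2: "k \<ge> 2" and Lpos: "\<forall>i<k. L i > 0" and Lsum: "(\<Sum>i<k. L i) = n"
    and gen: "generic k L"
begin

lemma npos: "n > 0"
proof -
  have "L 0 \<le> (\<Sum>i<k. L i)" using k2 by (intro member_le_sum) auto
  moreover have "L 0 > 0" using Lpos k2 by auto
  ultimately show ?thesis using Lsum by linarith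
qed

lemma Ssum_perm_k:
  assumes "\<sigma> permutes {..<k}"
  shows "Ssum L \<sigma> k = n"
proof -
  have "(\<Sum>j<k. L (\<sigma> j)) = (\<Sum>j<k. L j)"
    using sum.reindex_bij_betw[OF permutes_imp_bij[OF assms], of L] by simp
  then show ?thesis using Lsum by (simp add: Ssum_def)
qed

lemma Ssum_diff:
  assumes "i \<le> j"
  shows "Ssum L \<sigma> j = Ssum L \<sigma> i + (\<Sum>p\<in>{i..<j}. L (\<sigma> p))"
  using assms unfolding Ssum_def lessThan_atLeast0
  by (simp add: sum.atLeastLessThan_concat)

lemma Ssum_lt:
  assumes "\<sigma> permutes {..<k}" "i < k"
  shows "Ssum L \<sigma> i < n"
proof -
  have "L (\<sigma> (k - 1)) > 0" using Lpos permutes_in_image[OF assms(1)] k2 by auto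
  moreover have "L (\<sigma> (k - 1)) \<le> (\<Sum>p\<in>{i..<k}. L (\<sigma> p))"
    using assms k2 by (intro member_le_sum) auto
  ultimately show ?thesis using Ssum_diff[of i k \<sigma>] Ssum_perm_k[OF assms(1)] assms by linarith
qed

lemma Ssum_set:
  assumes "\<sigma> permutes {..<k}" "i \<le> k"
  shows "Ssum L \<sigma> i = (\<Sum>m\<in>\<sigma> ` {..<i}. L m)"
proof -
  have "inj_on \<sigma> {..<i}" using permutes_inj_on[OF assms(1)] .
  then show ?thesis by (simp add: Ssum_def sum.reindex)
qed

lemma ind_pos:
  assumes "\<sigma> permutes {..<k}" 
  shows "ind \<sigma> i (\<sigma> p) = (if p < i then 1 else 0)"
  using permutes_inj[OF assms] by (auto simp: ind_def inj_eq)

lemma sum_L_ind: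
  assumes "\<sigma> permutes {..<k}" "i \<le> k"
  shows "(\<Sum>m<k. int (L m) * ind \<sigma> i m) = int (Ssum L \<sigma> i)"
proof -
  have sub: "\<sigma> ` {..<i} \<subseteq> {..<k}"
  proof
    fix y assume "y \<in> \<sigma> ` {..<i}"
    then obtain p where "p < i" "y = \<sigma> p" by auto
    then show "y \<in> {..<k}" using assms(2) permutes_in_image[OF assms(1), of p] by simp
  qed
  have sub2: "{..<k} \<inter> \<sigma> ` {..<i} = \<sigma> ` {..<i}" using sub by blast
  have "(\<Sum>m<k. int (L m) * ind \<sigma> i m) = (\<Sum>m<k. if m \<in> \<sigma> ` {..<i} then int (L m) else 0)"
    unfolding ind_def by (intro sum.cong refl) simp
  also have "\<dots> = (\<Sum>m\<in>\<sigma> ` {..<i}. int (L m))"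
    using sum.inter_restrict[of "{..<k}" "\<lambda>m. int (L m)" "\<sigma> ` {..<i}"] sub2 by simp
  also have "\<dots> = int (Ssum L \<sigma> i)" unfolding Ssum_set[OF assms] by (rule of_nat_sum[symmetric])
  finally show ?thesis .
qed

lemma mod_same_add: "(a::nat) mod n = (a + d) mod n \<Longrightarrow> 0 < d \<Longrightarrow> d < n \<Longrightarrow> False"
proof -
  assume h: "a mod n = (a + d) mod n" "0 < d" "d < n"
  have "n dvd (a + d) - a" using mod_eq_dvd_iff_nat[of a "a + d" n] h(1) by simp
  then have "n dvd d" by simp
  then show False using nat_dvd_not_less[OF h(2,3)] by blast
qed

lemma vert_neq:
  assumes "\<sigma> permutes {..<k}" "i < j" "j < k"
  shows "vert n L x \<sigma> i \<noteq> vert n L x \<sigma> j"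
proof
  assume eq: "vert n L x \<sigma> i = vert n L x \<sigma> j"
  have pos: "(\<Sum>p\<in>{i..<j}. L (\<sigma> p)) > 0"
  proof -
    have "L (\<sigma> i) > 0" using Lpos permutes_in_image[OF assms(1)] assms by auto
    moreover have "L (\<sigma> i) \<le> (\<Sum>p\<in>{i..<j}. L (\<sigma> p))" using assms by (intro member_le_sum) auto
    ultimately show ?thesis by linarith
  qed
  have e: "Ssum L \<sigma> j = Ssum L \<sigma> i + (\<Sum>p\<in>{i..<j}. L (\<sigma> p))" using Ssum_diff assms by simp
  have lt: "Ssum L \<sigma> j < n" using Ssum_lt[OF assms(1)] assms by auto
  have "(x + Ssum L \<sigma> i) mod n = (x + Ssum L \<sigma> i + (\<Sum>p\<in>{i..<j}. L (\<sigma> p))) mod n"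
    using eq e by (simp add: vert_def add.assoc)
  moreover have "(\<Sum>p\<in>{i..<j}. L (\<sigma> p)) < n" using lt e by linarith
  ultimately show False using mod_same_add pos by blast
qed

lemma vert_inj:
  assumes "\<sigma> permutes {..<k}"
  shows "inj_on (vert n L x \<sigma>) {..<k}"
proof
  fix i j assume "i \<in> {..<k}" "j \<in> {..<k}" "vert n L x \<sigma> i = vert n L x \<sigma> j"
  then show "i = j" using vert_neq[OF assms, of i j x] vert_neq[OF assms, of j i x]
    by (cases i j rule: linorder_cases) auto
qed

end




lemma spread_cong: "(\<And>p. p < k \<Longrightarrow> y p = y' p) \<Longrightarrow> spread k y = spread k y'"
  unfolding spread_def by (intro arg_cong[where f=Max] image_cong) auto

lemma cis_eq_int:
  assumes "cis (2 * pi * a) = cis (2 * pi * b)"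
  shows "\<exists>z::int. a - b = of_int z"
proof -
  have "cis (2 * pi * (a - b)) = 1"
    using assms by (metis cis_divide divide_self_if cis_neq_zero right_diff_distrib)
  then have "cos (2 * pi * (a - b)) = 1" by (metis cis.sel(1) one_complex.sel(1))
  then obtain z::int where "2 * pi * (a - b) = of_int z * 2 * pi" using cos_one_2pi_int by blast
  then have "a - b = of_int z" by simp
  then show ?thesis by blast
qed

lemma cis_int: "cis (2 * pi * of_int z) = 1"
  by (simp add: cis_multiple_2pi)

context tonn
begin

lemma simplex_eq: "tonnetz_simplex n k L x \<sigma> = vert n L x \<sigma> ` {..<k}"
  unfolding tonnetz_simplex_def vert_def Ssum_def by auto

lemma cell_sum:
  assumes "\<sigma> permutes {..<k}" "f \<in> cell n k L x \<sigma>"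
  shows "(\<Sum>i<k. f (vert n L x \<sigma> i)) = 1"
proof -
  have "(\<Sum>i<k. f (vert n L x \<sigma> i)) = sum f (vert n L x \<sigma> ` {..<k})"
    using sum.reindex[OF vert_inj[OF assms(1)], of f] by simp
  then show ?thesis using assms(2) unfolding cell_def simplex_eq by simp
qed

lemma cell_wts:
  assumes "\<sigma> permutes {..<k}" "f \<in> cell n k L x \<sigma>"
  shows "wts (\<lambda>i. f (vert n L x \<sigma> i)) k"
  using assms cell_sum by unfold_locales (auto simp: cell_def)

lemma qv_pos:
  assumes "\<sigma> permutes {..<k}" "p < k"
  shows "qv n k L x \<sigma> f (\<sigma> p) = Qp (\<lambda>i. f (vert n L x \<sigma> i)) k p"
proof -
  have "qv n k L x \<sigma> f (\<sigma> p) = (\<Sum>i<k. if i \<in> {p<..<k} then f (vert n L x \<sigma> i) else 0)"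
    unfolding qv_def by (intro sum.cong refl) (simp add: ind_pos[OF assms(1)])
  also have "\<dots> = (\<Sum>i\<in>{..<k} \<inter> {p<..<k}. f (vert n L x \<sigma> i))"
    by (rule sum.inter_restrict[symmetric]) simp
  also have "{..<k} \<inter> {p<..<k} = {p<..<k}" by auto
  finally show ?thesis unfolding Qp_def by simp
qed

lemma ind_pos': 
  assumes "\<sigma> permutes {..<k}" "p < k"
  shows "ind \<sigma> j (\<sigma> p) = (if p < j then 1 else 0)"
  using ind_pos[OF assms(1)] .

lemma spread_vert:
  assumes "\<sigma> permutes {..<k}" "f \<in> cell n k L x \<sigma>" "j < k"
  shows "spread k (\<lambda>m. qv n k L x \<sigma> f m - of_int (ind \<sigma> j m)) = 1 - f (vert n L x \<sigma> j)"
proof -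
  interpret w: wts "\<lambda>i. f (vert n L x \<sigma> i)" k using cell_wts[OF assms(1,2)] .
  have "spread k (\<lambda>m. qv n k L x \<sigma> f m - of_int (ind \<sigma> j m))
      = spread k (\<lambda>p. qv n k L x \<sigma> f (\<sigma> p) - of_int (ind \<sigma> j (\<sigma> p)))"
    using spread_perm[OF assms(1), of "\<lambda>m. qv n k L x \<sigma> f m - of_int (ind \<sigma> j m)"] by simp
  also have "\<dots> = spread k (\<lambda>p. Qp (\<lambda>i. f (vert n L x \<sigma> i)) k p - of_int (if p < j then 1 else 0))"
    by (rule spread_cong) (simp add: qv_pos[OF assms(1)] ind_pos[OF assms(1)])
  also have "\<dots> = 1 - f (vert n L x \<sigma> j)"
    using w.S1[OF assms(3)] .
  finally show ?thesis .
qed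

lemma spread_lt1:
  assumes "\<sigma> permutes {..<k}" "f \<in> cell n k L x \<sigma>"
    and "spread k (\<lambda>m. qv n k L x \<sigma> f m - of_int (b m)) < 1"
  shows "\<exists>j<k. \<exists>r. \<forall>m<k. b m = ind \<sigma> j m + r"
proof -
  interpret w: wts "\<lambda>i. f (vert n L x \<sigma> i)" k using cell_wts[OF assms(1,2)] .
  have "spread k (\<lambda>m. qv n k L x \<sigma> f m - of_int (b m))
      = spread k (\<lambda>p. qv n k L x \<sigma> f (\<sigma> p) - of_int (b (\<sigma> p)))"
    using spread_perm[OF assms(1), of "\<lambda>m. qv n k L x \<sigma> f m - of_int (b m)"] by simp
  also have "\<dots> = spread k (\<lambda>p. Qp (\<lambda>i. f (vert n L x \<sigma> i)) k p - of_int (b (\<sigma> p)))"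
    by (rule spread_cong) (simp add: qv_pos[OF assms(1)])
  finally have "spread k (\<lambda>p. Qp (\<lambda>i. f (vert n L x \<sigma> i)) k p - of_int (b (\<sigma> p))) < 1"
    using assms(3) by simp
  from w.S2[OF this] obtain j r where jr: "j < k" "\<forall>p<k. b (\<sigma> p) = (if p < j then 1 else 0) + r"
    by blast
  have "b m = ind \<sigma> j m + r" if "m < k" for m
  proof -
    have p: "inv \<sigma> m < k" using permutes_in_image[OF permutes_inv[OF assms(1)]] that by simp
    have m: "m = \<sigma> (inv \<sigma> m)" using permutes_inverses(1)[OF assms(1)] by simp
    show ?thesis using jr(2) p ind_pos[OF assms(1), of j "inv \<sigma> m"] m by metis
  qed
  then show ?thesis using jr(1) by blast
qed

lemma psi_Lsum:
  "(\<Sum>m<k. real (L m) * psi n k L x \<sigma> f m) = - real x"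
proof -
  let ?A = "\<Sum>m'<k. real (L m') * qv n k L x \<sigma> f m'"
  define c where "c = (?A + real x) / real n"
  have "(\<Sum>m<k. real (L m) * psi n k L x \<sigma> f m)
      = (\<Sum>m<k. real (L m) * qv n k L x \<sigma> f m - real (L m) * c)"
    unfolding psi_def c_def by (simp add: right_diff_distrib)
  also have "\<dots> = ?A - (\<Sum>m<k. real (L m)) * c"
    by (simp add: sum_subtractf sum_distrib_right)
  finally have e: "(\<Sum>m<k. real (L m) * psi n k L x \<sigma> f m) = ?A - (\<Sum>m<k. real (L m)) * c" .
  also have "(\<Sum>m<k. real (L m)) = real n" using Lsum by (metis of_nat_sum)
  finally show ?thesis using npos e unfolding c_def by simp
qed


lemma Psi_eq_z:
  assumes "Psi n k L x \<sigma> f = Psi n k L x' \<sigma>' g"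
  obtains z :: "nat \<Rightarrow> int" where
    "\<And>m. m < k \<Longrightarrow> psi n k L x \<sigma> f m - psi n k L x' \<sigma>' g m = of_int (z m)"
proof -
  have "\<forall>m. \<exists>z::int. m < k \<longrightarrow> psi n k L x \<sigma> f m - psi n k L x' \<sigma>' g m = of_int z"
  proof
    fix m
    show "\<exists>z::int. m < k \<longrightarrow> psi n k L x \<sigma> f m - psi n k L x' \<sigma>' g m = of_int z"
    proof (cases "m < k")
      case True
      then have "cis (2 * pi * psi n k L x \<sigma> f m) = cis (2 * pi * psi n k L x' \<sigma>' g m)"
        using fun_cong[OF assms, of m] unfolding Psi_def by simp
      then show ?thesis using cis_eq_int by blast
    qed simp
  qed
  then obtain z where "\<forall>m. m < k \<longrightarrow> psi n k L x \<sigma> f m - psi n k L x' \<sigma>' g m = of_int (z m)"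
    by metis
  then show ?thesis using that by blast
qed

lemma z_Lsum:
  assumes "\<And>m. m < k \<Longrightarrow> psi n k L x \<sigma> f m - psi n k L x' \<sigma>' g m = of_int (z m)"
  shows "(\<Sum>m<k. int (L m) * z m) = int x' - int x"
proof -
  have "(\<Sum>m<k. real (L m) * of_int (z m)) = (\<Sum>m<k. real (L m) * psi n k L x \<sigma> f m - real (L m) * psi n k L x' \<sigma>' g m)"
    by (intro sum.cong refl) (simp add: assms[symmetric] right_diff_distrib)
  also have "\<dots> = real x' - real x" by (simp add: sum_subtractf psi_Lsum)
  finally have "real_of_int (\<Sum>m<k. int (L m) * z m) = real_of_int (int x' - int x)" by simp
  then show ?thesis by (simp only: of_int_eq_iff)
qed

lemma q_diff:
  assumes "\<And>m. m < k \<Longrightarrow> psi n k L x \<sigma> f m - psi n k L x' \<sigma>' g m = of_int (z m)"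
  obtains D where "\<And>m. m < k \<Longrightarrow> qv n k L x \<sigma> f m = qv n k L x' \<sigma>' g m + of_int (z m) + D"
proof -
  define D where "D = ((\<Sum>m'<k. real (L m') * qv n k L x \<sigma> f m') + real x) / real n
     - ((\<Sum>m'<k. real (L m') * qv n k L x' \<sigma>' g m') + real x') / real n"
  have "qv n k L x \<sigma> f m = qv n k L x' \<sigma>' g m + of_int (z m) + D" if "m < k" for m
    using assms[OF that] unfolding psi_def D_def by simp
  then show ?thesis using that by blast
qed

lemma inj1:
  assumes \<sigma>: "\<sigma> permutes {..<k}" and \<sigma>': "\<sigma>' permutes {..<k}"
    and f: "f \<in> cell n k L x \<sigma>" and g: "g \<in> cell n k L x' \<sigma>'"
    and eq: "Psi n k L x \<sigma> f = Psi n k L x' \<sigma>' g" and gv: "g v > 0"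
  shows "f v = g v"
proof -
  have "v \<in> tonnetz_simplex n k L x' \<sigma>'" using g gv unfolding cell_def by force
  then obtain i' where i': "i' < k" "v = vert n L x' \<sigma>' i'" unfolding simplex_eq by auto
  obtain z where z: "\<And>m. m < k \<Longrightarrow> psi n k L x \<sigma> f m - psi n k L x' \<sigma>' g m = of_int (z m)"
    using Psi_eq_z[OF eq] by blast
  have Lz: "(\<Sum>m<k. int (L m) * z m) = int x' - int x" using z_Lsum[OF z] .
  obtain D where D: "\<And>m. m < k \<Longrightarrow> qv n k L x \<sigma> f m = qv n k L x' \<sigma>' g m + of_int (z m) + D"
    using q_diff[OF z] by blast
  define b where "b m = z m + ind \<sigma>' i' m" for m
  have sp: "spread k (\<lambda>m. qv n k L x \<sigma> f m - of_int (b m)) = 1 - g v"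
  proof -
    have "spread k (\<lambda>m. qv n k L x \<sigma> f m - of_int (b m))
        = spread k (\<lambda>m. (qv n k L x' \<sigma>' g m - of_int (ind \<sigma>' i' m)) + D)"
      by (rule spread_cong) (simp add: D b_def)
    also have "\<dots> = spread k (\<lambda>m. qv n k L x' \<sigma>' g m - of_int (ind \<sigma>' i' m))"
      by (rule spread_shift)
    also have "\<dots> = 1 - g v" using spread_vert[OF \<sigma>' g i'(1)] i'(2) by simp
    finally show ?thesis .
  qed
  then have "spread k (\<lambda>m. qv n k L x \<sigma> f m - of_int (b m)) < 1" using gv by simp
  from spread_lt1[OF \<sigma> f this] obtain j r where jr: "j < k" "\<And>m. m < k \<Longrightarrow> b m = ind \<sigma> j m + r"
    by blast
  have "spread k (\<lambda>m. qv n k L x \<sigma> f m - of_int (b m))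
      = spread k (\<lambda>m. (qv n k L x \<sigma> f m - of_int (ind \<sigma> j m)) + (- of_int r))"
    by (rule spread_cong) (simp add: jr(2))
  also have "\<dots> = spread k (\<lambda>m. qv n k L x \<sigma> f m - of_int (ind \<sigma> j m))"
    by (rule spread_shift)
  also have "\<dots> = 1 - f (vert n L x \<sigma> j)"
    by (rule spread_vert[OF \<sigma> f jr(1)])
  finally have fg: "f (vert n L x \<sigma> j) = g v" using sp by simp
  have "(\<Sum>m<k. int (L m) * b m) = (\<Sum>m<k. int (L m) * z m) + (\<Sum>m<k. int (L m) * ind \<sigma>' i' m)"
    unfolding b_def by (simp add: distrib_left sum.distrib)
  also have "\<dots> = int x' - int x + int (Ssum L \<sigma>' i')" using Lz sum_L_ind[OF \<sigma>'] i'(1) by simp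
  finally have e1: "(\<Sum>m<k. int (L m) * b m) = int x' - int x + int (Ssum L \<sigma>' i')" .
  have "(\<Sum>m<k. int (L m) * b m) = (\<Sum>m<k. int (L m) * ind \<sigma> j m + int (L m) * r)"
    by (intro sum.cong refl) (simp add: jr(2) distrib_left)
  also have "\<dots> = int (Ssum L \<sigma> j) + (\<Sum>m<k. int (L m)) * r"
    using sum_L_ind[OF \<sigma>] jr(1) by (simp add: sum.distrib sum_distrib_right)
  also have "(\<Sum>m<k. int (L m)) = int n" using Lsum by (metis of_nat_sum)
  finally have e2: "(\<Sum>m<k. int (L m) * b m) = int (Ssum L \<sigma> j) + int n * r" .
  have "int x + int (Ssum L \<sigma> j) = (int x' + int (Ssum L \<sigma>' i')) + (- r) * int n"
    using e1 e2 by (simp add: algebra_simps)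
  then have "(int x + int (Ssum L \<sigma> j)) mod int n = (int x' + int (Ssum L \<sigma>' i')) mod int n"
    by (simp only: mod_mult_self1)
  then have "int ((x + Ssum L \<sigma> j) mod n) = int ((x' + Ssum L \<sigma>' i') mod n)"
    by (simp add: zmod_int)
  then have "vert n L x \<sigma> j = v" unfolding i'(2) vert_def by simp
  then show ?thesis using fg by simp
qed

lemma inj_cells:
  assumes \<sigma>: "\<sigma> permutes {..<k}" and \<sigma>': "\<sigma>' permutes {..<k}"
    and f: "f \<in> cell n k L x \<sigma>" and g: "g \<in> cell n k L x' \<sigma>'"
    and eq: "Psi n k L x \<sigma> f = Psi n k L x' \<sigma>' g"
  shows "f = g"
proof
  fix v
  show "f v = g v"
  proof (cases "g v > 0")
    case True
    then show ?thesis using inj1[OF assms] by blast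
  next
    case False
    show ?thesis
    proof (cases "f v > 0")
      case True
      then show ?thesis using inj1[OF \<sigma>' \<sigma> g f eq[symmetric]] by simp
    next
      case False
      have "0 \<le> f v" "0 \<le> g v" using f g unfolding cell_def by auto
      then show ?thesis using \<open>\<not> g v > 0\<close> False by linarith
    qed
  qed
qed

end



lemma int_mod0_small: "(a::int) mod n = 0 \<Longrightarrow> - n < a \<Longrightarrow> a < n \<Longrightarrow> a = 0"
proof -
  assume h: "a mod n = 0" "- n < a" "a < n"
  then have n: "n > 0" by simp
  obtain c where c: "a = n * c" using h(1) by (metis dvd_def mod_0_imp_dvd)
  have "c < 1" using h(3) c n by (metis mult.right_neutral mult_less_cancel_left_pos not_le)
  moreover have "c > -1" using h(2) c n
    by (metis mult.commute mult_minus1 mult_less_cancel_left_pos not_le neg_less_iff_less)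
  ultimately have "c = 0" by linarith
  then show ?thesis using c by simp
qed

lemma int_mod0_two: "(a::int) mod n = 0 \<Longrightarrow> 0 \<le> a \<Longrightarrow> a < 2 * n \<Longrightarrow> a = 0 \<or> a = n"
proof -
  assume h: "a mod n = 0" "0 \<le> a" "a < 2 * n"
  then have n: "n > 0" by simp
  obtain c where c: "a = n * c" using h(1) by (metis dvd_def mod_0_imp_dvd)
  have "c < 2" using h(3) c n by (metis mult.commute mult_less_cancel_left_pos)
  moreover have "c \<ge> 0" using h(2) c n by (simp add: zero_le_mult_iff)
  ultimately have "c = 0 \<or> c = 1" by linarith
  then show ?thesis using c by auto
qed

context tonn
begin

lemma gen_eq: "X \<subseteq> {..<k} \<Longrightarrow> Y \<subseteq> {..<k} \<Longrightarrow> sum L X = sum L Y \<Longrightarrow> X = Y"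
  using gen unfolding generic_def by blast

lemma finite_sub: "X \<subseteq> {..<k} \<Longrightarrow> finite X"
  using finite_subset by blast

lemma K_minus:
  assumes X: "X \<subseteq> {..<k}" and Y: "Y \<subseteq> {..<k}" and XL: "sum L X < n" and YL: "sum L Y < n"
    and m: "(int (sum L X) - int (sum L Y)) mod int n = 0"
  shows "X = Y"
proof -
  have "int (sum L X) - int (sum L Y) = 0"
    using int_mod0_small[OF m] XL YL by linarith
  then have "sum L X = sum L Y" by linarith
  then show ?thesis using gen_eq[OF X Y] by blast
qed

lemma K_plus:
  assumes X: "X \<subseteq> {..<k}" and Y: "Y \<subseteq> {..<k}" and XL: "sum L X < n" and YL: "sum L Y < n"
    and m: "(int (sum L X) + int (sum L Y)) mod int n = 0"
  shows "(X = {} \<and> Y = {}) \<or> X = {..<k} - Y"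
proof -
  have "int (sum L X) + int (sum L Y) = 0 \<or> int (sum L X) + int (sum L Y) = int n"
    using int_mod0_two[OF m] XL YL by linarith
  then show ?thesis
  proof
    assume "int (sum L X) + int (sum L Y) = 0"
    then have "sum L X = 0" "sum L Y = 0" by linarith+
    then have "sum L X = sum L {}" "sum L Y = sum L {}" by (simp_all only: sum.empty)
    then show ?thesis using gen_eq[OF X] gen_eq[OF Y] by blast
  next
    assume e: "int (sum L X) + int (sum L Y) = int n"
    have "sum L ({..<k} - Y) = sum L {..<k} - sum L Y"
      using Y by (intro sum_diff_nat) (auto intro: finite_sub)
    moreover have "sum L X + sum L Y = n" using e by linarith
    ultimately have "sum L X = sum L ({..<k} - Y)" using Lsum by linarith
    then show ?thesis using gen_eq[OF X, of "{..<k} - Y"] by blast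
  qed
qed

definition indS :: "nat set \<Rightarrow> nat \<Rightarrow> int" where
  "indS X m = (if m \<in> X then 1 else 0)"

lemma K_core:
  assumes X: "X \<subseteq> {..<k}" and Y: "Y \<subseteq> {..<k}" and XL: "sum L X < n" and YL: "sum L Y < n"
    and e: "e = 1 \<or> e = -1" and e': "e' = 1 \<or> e' = -1"
    and m: "(e * int (sum L X) - e' * int (sum L Y)) mod int n = 0"
  shows "\<exists>\<kappa>. (\<forall>m<k. e * indS X m - e' * indS Y m = \<kappa>)
      \<and> e * int (sum L X) - e' * int (sum L Y) = \<kappa> * int n"
proof -
  have neg: "(- a) mod int n = 0" if "a mod int n = 0" for a :: int
    using that by (metis dvd_minus_iff mod_0_imp_dvd dvd_imp_mod_0)
  consider "e = 1" "e' = 1" | "e = -1" "e' = -1" | "e = 1" "e' = -1" | "e = -1" "e' = 1"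
    using e e' by blast
  then show ?thesis
  proof cases
    case 1
    then have "X = Y" using K_minus[OF X Y XL YL] m by simp
    then show ?thesis using 1 by (intro exI[of _ 0]) simp
  next
    case 2
    then have "(int (sum L X) - int (sum L Y)) mod int n = 0" using m neg[of "- int (sum L X) + int (sum L Y)"] by simp
    then have "X = Y" using K_minus[OF X Y XL YL] by simp
    then show ?thesis using 2 by (intro exI[of _ 0]) simp
  next
    case 3
    then have mm: "(int (sum L X) + int (sum L Y)) mod int n = 0" using m by simp
    from K_plus[OF X Y XL YL mm] show ?thesis
    proof
      assume "X = {} \<and> Y = {}"
      then show ?thesis using 3 by (intro exI[of _ 0]) (simp add: indS_def)
    next
      assume XY: "X = {..<k} - Y"
      have "sum L X + sum L Y = n"
        using XY Y Lsum by (metis Diff_partition sum.subset_diff finite_lessThan add.commute)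
      then have "int (sum L X) + int (sum L Y) = int n" by linarith
      moreover have "indS X m + indS Y m = 1" if "m < k" for m
        using XY that by (auto simp: indS_def)
      ultimately show ?thesis using 3 by (intro exI[of _ 1]) simp
    qed
  next
    case 4
    then have mm: "(int (sum L X) + int (sum L Y)) mod int n = 0"
      using m neg[of "- int (sum L X) - int (sum L Y)"] 4 by (simp add: add.commute)
    from K_plus[OF X Y XL YL mm] show ?thesis
    proof
      assume "X = {} \<and> Y = {}"
      then show ?thesis using 4 by (intro exI[of _ 0]) (simp add: indS_def)
    next
      assume XY: "X = {..<k} - Y"
      have "sum L X + sum L Y = n"
        using XY Y Lsum by (metis Diff_partition sum.subset_diff finite_lessThan add.commute)
      then have "int (sum L X) + int (sum L Y) = int n" by linarith
      moreover have "indS X m + indS Y m = 1" if "m < k" for m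
        using XY that by (auto simp: indS_def)
      ultimately show ?thesis using 4 by (intro exI[of _ "-1"]) (simp add: algebra_simps)
    qed
  qed
qed

lemma ind_diff_le:
  assumes \<sigma>: "\<sigma> permutes {..<k}" and ba: "b \<le> a" and a: "a < k"
  shows "\<sigma> ` {b..<a} \<subseteq> {..<k}" "sum L (\<sigma> ` {b..<a}) < n"
    "\<And>m. ind \<sigma> a m - ind \<sigma> b m = indS (\<sigma> ` {b..<a}) m"
    "int (Ssum L \<sigma> a) - int (Ssum L \<sigma> b) = int (sum L (\<sigma> ` {b..<a}))"
proof -
  have inj: "inj \<sigma>" using permutes_inj[OF \<sigma>] .
  show "\<sigma> ` {b..<a} \<subseteq> {..<k}"
  proof
    fix y assume "y \<in> \<sigma> ` {b..<a}"
    then obtain p where "p < a" "y = \<sigma> p" by auto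
    then show "y \<in> {..<k}" using a permutes_in_image[OF \<sigma>, of p] by simp
  qed
  have s: "sum L (\<sigma> ` {b..<a}) = (\<Sum>p\<in>{b..<a}. L (\<sigma> p))"
    using sum.reindex[OF inj_on_subset[OF inj subset_UNIV], of L] by simp
  then show "int (Ssum L \<sigma> a) - int (Ssum L \<sigma> b) = int (sum L (\<sigma> ` {b..<a}))"
    using Ssum_diff[OF ba, of \<sigma>] by linarith
  show "sum L (\<sigma> ` {b..<a}) < n" using s Ssum_diff[OF ba, of \<sigma>] Ssum_lt[OF \<sigma> a] by linarith
  fix m
  have "{..<a} = {..<b} \<union> {b..<a}" using ba by auto
  then have U: "\<sigma> ` {..<a} = \<sigma> ` {..<b} \<union> \<sigma> ` {b..<a}" by (simp add: image_Un)
  have "\<sigma> ` {..<b} \<inter> \<sigma> ` {b..<a} = \<sigma> ` ({..<b} \<inter> {b..<a})"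
    using inj by (simp add: image_Int)
  moreover have "{..<b} \<inter> {b..<a} = {}" by auto
  ultimately have D: "\<sigma> ` {..<b} \<inter> \<sigma> ` {b..<a} = {}" by simp
  show "ind \<sigma> a m - ind \<sigma> b m = indS (\<sigma> ` {b..<a}) m"
    unfolding ind_def indS_def U
    by (cases "m \<in> \<sigma> ` {..<b}"; cases "m \<in> \<sigma> ` {b..<a}") (insert D, simp_all, blast+)
qed

lemma ind_diff:
  assumes \<sigma>: "\<sigma> permutes {..<k}" and a: "a < k" and b: "b < k"
  shows "\<exists>X e. X \<subseteq> {..<k} \<and> sum L X < n \<and> (e = 1 \<or> e = -1)
     \<and> (\<forall>m. ind \<sigma> a m - ind \<sigma> b m = e * indS X m)
     \<and> int (Ssum L \<sigma> a) - int (Ssum L \<sigma> b) = e * int (sum L X)"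
proof (cases "b \<le> a")
  case True
  show ?thesis using ind_diff_le[OF \<sigma> True a] by (intro exI[of _ "\<sigma> ` {b..<a}"] exI[of _ 1]) simp
next
  case False
  then have ab: "a \<le> b" by simp
  note d = ind_diff_le[OF \<sigma> ab b]
  have "\<forall>m. ind \<sigma> a m - ind \<sigma> b m = - 1 * indS (\<sigma> ` {a..<b}) m"
    using d(3) by (simp add: algebra_simps)
  moreover have "int (Ssum L \<sigma> a) - int (Ssum L \<sigma> b) = - 1 * int (sum L (\<sigma> ` {a..<b}))"
    using d(4) by simp
  ultimately show ?thesis using d(1,2) by (intro exI[of _ "\<sigma> ` {a..<b}"] exI[of _ "-1"]) simp
qed

end



context tonn
begin

lemma vert_cong_dvd:
  assumes "vert n L x \<sigma> i = vert n L x' \<sigma>' i'"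
  shows "int n dvd (int x + int (Ssum L \<sigma> i)) - (int x' + int (Ssum L \<sigma>' i'))"
proof -
  have "int ((x + Ssum L \<sigma> i) mod n) = int ((x' + Ssum L \<sigma>' i') mod n)" using assms by (simp add: vert_def)
  then have "(int x + int (Ssum L \<sigma> i)) mod int n = (int x' + int (Ssum L \<sigma>' i')) mod int n"
    by (simp add: zmod_int)
  then show ?thesis by (simp add: mod_eq_dvd_iff)
qed

lemma wd:
  assumes \<sigma>: "\<sigma> permutes {..<k}" and \<sigma>': "\<sigma>' permutes {..<k}"
    and f: "f \<in> cell n k L x \<sigma>" and f': "f \<in> cell n k L x' \<sigma>'"
  shows "Psi n k L x \<sigma> f = Psi n k L x' \<sigma>' f"
proof -
  define t where "t i = f (vert n L x \<sigma> i)" for i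
  define t' where "t' i = f (vert n L x' \<sigma>' i)" for i
  define T where "T = {i. i < k \<and> t i > 0}"
  define T' where "T' = {i. i < k \<and> t' i > 0}"
  have fnn: "0 \<le> f v" for v using f unfolding cell_def by auto
  have z': "f v = 0" if "v \<notin> vert n L x' \<sigma>' ` {..<k}" for v
    using f' that unfolding cell_def simplex_eq by auto
  have z0: "f v = 0" if "v \<notin> vert n L x \<sigma> ` {..<k}" for v
    using f that unfolding cell_def simplex_eq by auto
  define \<phi> where "\<phi> i = (SOME i'. i' < k \<and> vert n L x' \<sigma>' i' = vert n L x \<sigma> i)" for i
  define \<phi>' where "\<phi>' i' = (SOME i. i < k \<and> vert n L x \<sigma> i = vert n L x' \<sigma>' i')" for i'
  have \<phi>: "\<phi> i < k \<and> vert n L x' \<sigma>' (\<phi> i) = vert n L x \<sigma> i" if "i \<in> T" for i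
  proof -
    have "f (vert n L x \<sigma> i) > 0" using that unfolding T_def t_def by auto
    then have "vert n L x \<sigma> i \<in> vert n L x' \<sigma>' ` {..<k}" using z' by force
    then have "\<exists>i'. i' < k \<and> vert n L x' \<sigma>' i' = vert n L x \<sigma> i" by force
    then show ?thesis unfolding \<phi>_def by (rule someI_ex)
  qed
  have \<phi>': "\<phi>' i < k \<and> vert n L x \<sigma> (\<phi>' i) = vert n L x' \<sigma>' i" if "i \<in> T'" for i
  proof -
    have "f (vert n L x' \<sigma>' i) > 0" using that unfolding T'_def t'_def by auto
    then have "vert n L x' \<sigma>' i \<in> vert n L x \<sigma> ` {..<k}" using z0 by force
    then have "\<exists>i'. i' < k \<and> vert n L x \<sigma> i' = vert n L x' \<sigma>' i" by force
    then show ?thesis unfolding \<phi>'_def by (rule someI_ex)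
  qed
  have \<phi>T: "\<phi> i \<in> T'" "t' (\<phi> i) = t i" if "i \<in> T" for i
    using \<phi>[OF that] that unfolding T_def T'_def t_def t'_def by auto
  have \<phi>'T: "\<phi>' i \<in> T" if "i \<in> T'" for i
    using \<phi>'[OF that] that unfolding T_def T'_def t_def t'_def by auto
  have \<phi>\<phi>': "\<phi>' (\<phi> i) = i" if "i \<in> T" for i
  proof -
    have "vert n L x \<sigma> (\<phi>' (\<phi> i)) = vert n L x \<sigma> i" "\<phi>' (\<phi> i) < k" "i < k"
      using \<phi>'[OF \<phi>T(1)[OF that]] \<phi>[OF that] that unfolding T_def by auto
    then show ?thesis using vert_inj[OF \<sigma>, of x] unfolding inj_on_def by blast
  qed
  have \<phi>'\<phi>: "\<phi> (\<phi>' i) = i" if "i \<in> T'" for i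
  proof -
    have "vert n L x' \<sigma>' (\<phi> (\<phi>' i)) = vert n L x' \<sigma>' i" "\<phi> (\<phi>' i) < k" "i < k"
      using \<phi>[OF \<phi>'T[OF that]] \<phi>'[OF that] that unfolding T'_def by auto
    then show ?thesis using vert_inj[OF \<sigma>', of x'] unfolding inj_on_def by blast
  qed
  have tsum: "(\<Sum>i<k. t i) = 1" using cell_sum[OF \<sigma> f] unfolding t_def .
  have tnn: "0 \<le> t i" for i unfolding t_def using fnn .
  have Tsub: "T \<subseteq> {..<k}" "T' \<subseteq> {..<k}" unfolding T_def T'_def by auto
  have restrict: "(\<Sum>i<k. t i * c i) = (\<Sum>i\<in>T. t i * c i)" for c :: "nat \<Rightarrow> real"
  proof (rule sum.mono_neutral_right)
    show "\<forall>i\<in>{..<k} - T. t i * c i = 0"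
      using tnn unfolding T_def by (auto simp: not_less intro: antisym)
  qed (use Tsub in auto)
  have restrict': "(\<Sum>i<k. t' i * c i) = (\<Sum>i\<in>T'. t' i * c i)" for c :: "nat \<Rightarrow> real"
  proof (rule sum.mono_neutral_right)
    show "\<forall>i\<in>{..<k} - T'. t' i * c i = 0"
      using fnn unfolding T'_def t'_def by (auto simp: not_less intro: antisym)
  qed (use Tsub in auto)
  have TS: "(\<Sum>i\<in>T. t i) = 1" using restrict[of "\<lambda>_. 1"] tsum by simp
  obtain i0 where i0: "i0 \<in> T"
  proof (cases "T = {}")
    case True
    then show ?thesis using TS by simp
  qed blast
  define i0' where "i0' = \<phi> i0"
  have i0k: "i0 < k" "i0' < k" using i0 \<phi>[OF i0] unfolding T_def i0'_def by auto
  define c0 where "c0 m = ind \<sigma> i0 m - ind \<sigma>' i0' m" for m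
  have key: "\<exists>\<kappa>. \<forall>m<k. ind \<sigma> i m - ind \<sigma>' (\<phi> i) m = c0 m + \<kappa>" if "i \<in> T" for i
  proof -
    have ik: "i < k" "\<phi> i < k" using that \<phi>[OF that] unfolding T_def by auto
    obtain X e where X: "X \<subseteq> {..<k}" "sum L X < n" "e = 1 \<or> e = -1"
      "\<forall>m. ind \<sigma> i m - ind \<sigma> i0 m = e * indS X m"
      "int (Ssum L \<sigma> i) - int (Ssum L \<sigma> i0) = e * int (sum L X)"
      using ind_diff[OF \<sigma> ik(1) i0k(1)] by blast
    obtain Y e' where Y: "Y \<subseteq> {..<k}" "sum L Y < n" "e' = 1 \<or> e' = -1"
      "\<forall>m. ind \<sigma>' (\<phi> i) m - ind \<sigma>' i0' m = e' * indS Y m"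
      "int (Ssum L \<sigma>' (\<phi> i)) - int (Ssum L \<sigma>' i0') = e' * int (sum L Y)"
      using ind_diff[OF \<sigma>' ik(2) i0k(2)] by blast
    have d1: "int n dvd (int x + int (Ssum L \<sigma> i)) - (int x' + int (Ssum L \<sigma>' (\<phi> i)))"
      using vert_cong_dvd[OF conjunct2[OF \<phi>[OF that], symmetric]] .
    have d2: "int n dvd (int x + int (Ssum L \<sigma> i0)) - (int x' + int (Ssum L \<sigma>' i0'))"
      using vert_cong_dvd[OF conjunct2[OF \<phi>[OF i0], symmetric]] unfolding i0'_def .
    have "int n dvd ((int x + int (Ssum L \<sigma> i)) - (int x' + int (Ssum L \<sigma>' (\<phi> i))))
        - ((int x + int (Ssum L \<sigma> i0)) - (int x' + int (Ssum L \<sigma>' i0')))"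
      using d1 d2 by (rule dvd_diff)
    moreover have "((int x + int (Ssum L \<sigma> i)) - (int x' + int (Ssum L \<sigma>' (\<phi> i))))
        - ((int x + int (Ssum L \<sigma> i0)) - (int x' + int (Ssum L \<sigma>' i0')))
        = e * int (sum L X) - e' * int (sum L Y)"
      using X(5) Y(5) by linarith
    ultimately have "(e * int (sum L X) - e' * int (sum L Y)) mod int n = 0"
      by (simp add: dvd_imp_mod_0)
    from K_core[OF X(1) Y(1) X(2) Y(2) X(3) Y(3) this] obtain \<kappa> where
      \<kappa>: "\<forall>m<k. e * indS X m - e' * indS Y m = \<kappa>" by blast
    have "ind \<sigma> i m - ind \<sigma>' (\<phi> i) m = c0 m + \<kappa>" if "m < k" for m
    proof -
      have "ind \<sigma> i m - ind \<sigma> i0 m = e * indS X m" "ind \<sigma>' (\<phi> i) m - ind \<sigma>' i0' m = e' * indS Y m"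
        "e * indS X m - e' * indS Y m = \<kappa>" using \<kappa> X(4) Y(4) that by auto
      then show ?thesis unfolding c0_def by linarith
    qed
    then show ?thesis by blast
  qed
  then have "\<forall>i\<in>T. \<exists>\<kappa>. \<forall>m<k. ind \<sigma> i m - ind \<sigma>' (\<phi> i) m = c0 m + \<kappa>" by blast
  from bchoice[OF this] obtain \<kappa> where \<kappa>0: "\<forall>i\<in>T. \<forall>m<k. ind \<sigma> i m - ind \<sigma>' (\<phi> i) m = c0 m + \<kappa> i"
    by blast
  then have \<kappa>: "\<And>i m. i \<in> T \<Longrightarrow> m < k \<Longrightarrow> ind \<sigma> i m - ind \<sigma>' (\<phi> i) m = c0 m + \<kappa> i"
    by blast
  define K0 where "K0 = (\<Sum>i\<in>T. t i * of_int (\<kappa> i))"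
  have qd: "qv n k L x \<sigma> f m - qv n k L x' \<sigma>' f m = of_int (c0 m) + K0" if "m < k" for m
  proof -
    have q1: "qv n k L x \<sigma> f m = (\<Sum>i\<in>T. t i * of_int (ind \<sigma> i m))"
      unfolding qv_def t_def[symmetric] using restrict .
    have "qv n k L x' \<sigma>' f m = (\<Sum>i'\<in>T'. t' i' * of_int (ind \<sigma>' i' m))"
      unfolding qv_def t'_def[symmetric] using restrict' .
    also have "\<dots> = (\<Sum>i\<in>T. t' (\<phi> i) * of_int (ind \<sigma>' (\<phi> i) m))"
      by (rule sum.reindex_bij_witness[where i = \<phi>' and j = \<phi>, symmetric])
         (use \<phi>\<phi>' \<phi>T \<phi>'\<phi> \<phi>'T in auto)
    also have "\<dots> = (\<Sum>i\<in>T. t i * of_int (ind \<sigma>' (\<phi> i) m))"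
      using \<phi>T(2) by (intro sum.cong refl) simp
    finally have q2: "qv n k L x' \<sigma>' f m = (\<Sum>i\<in>T. t i * of_int (ind \<sigma>' (\<phi> i) m))" .
    have "qv n k L x \<sigma> f m - qv n k L x' \<sigma>' f m
        = (\<Sum>i\<in>T. t i * of_int (ind \<sigma> i m - ind \<sigma>' (\<phi> i) m))"
      unfolding q1 q2 by (simp add: sum_subtractf right_diff_distrib)
    also have "\<dots> = (\<Sum>i\<in>T. t i * of_int (c0 m) + t i * of_int (\<kappa> i))"
      using \<kappa> that by (intro sum.cong refl) (simp add: distrib_left)
    also have "\<dots> = (\<Sum>i\<in>T. t i) * of_int (c0 m) + K0"
      unfolding K0_def by (simp add: sum.distrib sum_distrib_right)
    finally show ?thesis using TS by simp
  qed
  have Ad: "(\<Sum>m<k. real (L m) * qv n k L x \<sigma> f m) - (\<Sum>m<k. real (L m) * qv n k L x' \<sigma>' f m)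
      = of_int (int (Ssum L \<sigma> i0) - int (Ssum L \<sigma>' i0')) + real n * K0"
  proof -
    have "(\<Sum>m<k. real (L m) * qv n k L x \<sigma> f m) - (\<Sum>m<k. real (L m) * qv n k L x' \<sigma>' f m)
        = (\<Sum>m<k. real (L m) * of_int (c0 m) + real (L m) * K0)"
      unfolding sum_subtractf[symmetric] using qd
      by (intro sum.cong refl) (simp add: right_diff_distrib[symmetric] distrib_left)
    also have "\<dots> = of_int (\<Sum>m<k. int (L m) * c0 m) + (\<Sum>m<k. real (L m)) * K0"
      by (simp add: sum.distrib sum_distrib_right)
    also have "(\<Sum>m<k. int (L m) * c0 m) = int (Ssum L \<sigma> i0) - int (Ssum L \<sigma>' i0')"
      unfolding c0_def using sum_L_ind[OF \<sigma>, of i0] sum_L_ind[OF \<sigma>', of i0'] i0k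
      by (simp add: right_diff_distrib sum_subtractf)
    also have "(\<Sum>m<k. real (L m)) = real n" using Lsum by (metis of_nat_sum)
    finally show ?thesis .
  qed
  obtain w where w: "(int x + int (Ssum L \<sigma> i0)) - (int x' + int (Ssum L \<sigma>' i0')) = int n * w"
    using vert_cong_dvd[OF conjunct2[OF \<phi>[OF i0], symmetric]] unfolding i0'_def by (elim dvdE)
  have pd: "psi n k L x \<sigma> f m = psi n k L x' \<sigma>' f m + of_int (c0 m - w)" if "m < k" for m
  proof -
    have nz: "real n \<noteq> 0" using npos by simp
    have wr: "real_of_int (int (Ssum L \<sigma> i0) - int (Ssum L \<sigma>' i0')) = real n * of_int w - real x + real x'"
      using arg_cong[OF w, of real_of_int] by simp
    show ?thesis
      unfolding psi_def using qd[OF that] Ad wr nz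
      by (simp add: field_simps)
  qed
  show ?thesis
  proof
    fix m
    show "Psi n k L x \<sigma> f m = Psi n k L x' \<sigma>' f m"
    proof (cases "m < k")
      case True
      have "cis (2 * pi * psi n k L x \<sigma> f m) = cis (2 * pi * psi n k L x' \<sigma>' f m) * cis (2 * pi * of_int (c0 m - w))"
        unfolding pd[OF True] by (simp only: cis_mult distrib_left)
      then show ?thesis unfolding Psi_def using True cis_int by simp
    qed (simp add: Psi_def)
  qed
qed

end



lemma sort_perm:
  fixes \<theta> :: "nat \<Rightarrow> real"
  shows "\<exists>\<sigma>. \<sigma> permutes {..<k} \<and> (\<forall>a b. a \<le> b \<longrightarrow> b < k \<longrightarrow> \<theta> (\<sigma> b) \<le> \<theta> (\<sigma> a))"
proof -
  define xs where "xs = sort_key (\<lambda>m. - \<theta> m) [0..<k]"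
  have len: "length xs = k" unfolding xs_def by (simp add: length_sort)
  have dist: "distinct xs" unfolding xs_def by (simp add: distinct_sort)
  have set: "set xs = {..<k}" unfolding xs_def by (auto simp: set_sort)
  have sorted: "sorted (map (\<lambda>m. - \<theta> m) xs)" unfolding xs_def by (rule sorted_sort_key)
  define \<sigma> where "\<sigma> i = (if i < k then xs ! i else i)" for i
  have bij: "bij_betw ((!) xs) {..<k} {..<k}"
    using bij_betw_nth[OF dist] len set by simp
  have "bij_betw \<sigma> {..<k} {..<k}"
    using bij by (rule bij_betw_cong[THEN iffD1, rotated]) (simp add: \<sigma>_def)
  then have perm: "\<sigma> permutes {..<k}"
    by (rule bij_imp_permutes) (simp add: \<sigma>_def)
  have "\<theta> (\<sigma> b) \<le> \<theta> (\<sigma> a)" if "a \<le> b" "b < k" for a b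
  proof -
    have "(map (\<lambda>m. - \<theta> m) xs) ! a \<le> (map (\<lambda>m. - \<theta> m) xs) ! b"
      using sorted_nth_mono[OF sorted that(1)] that len by simp
    then show ?thesis using that len by (simp add: \<sigma>_def)
  qed
  then show ?thesis using perm by blast
qed

lemma cis_prod: "finite A \<Longrightarrow> (\<Prod>i\<in>A. cis (f i)) = cis (\<Sum>i\<in>A. f i)"
  by (induction A rule: finite_induct) (simp_all add: cis_mult)

lemma unit_cis:
  assumes "norm z = 1"
  shows "\<exists>\<theta>. 0 \<le> \<theta> \<and> \<theta> < 1 \<and> z = cis (2 * pi * \<theta>)"
proof -
  have z: "z = cis (Arg z)" using rcis_cmod_Arg[of z] assms by (simp add: rcis_def)
  define \<theta> where "\<theta> = frac (Arg z / (2 * pi))"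
  have "2 * pi * \<theta> = Arg z - 2 * pi * of_int \<lfloor>Arg z / (2 * pi)\<rfloor>"
    unfolding \<theta>_def frac_def by (simp add: right_diff_distrib)
  then have "cis (2 * pi * \<theta>) = cis (Arg z) / cis (2 * pi * of_int \<lfloor>Arg z / (2 * pi)\<rfloor>)"
    by (simp only: cis_divide)
  also have "\<dots> = z" using z cis_multiple_2pi[of "of_int \<lfloor>Arg z / (2 * pi)\<rfloor>"] by simp
  finally show ?thesis unfolding \<theta>_def using frac_lt_1 frac_ge_0 by metis
qed

lemma tele:
  fixes Q :: "nat \<Rightarrow> real"
  shows "p < k \<Longrightarrow> (\<Sum>i\<in>{p<..<k}. Q (i - 1) - Q i) = Q p - Q (k - 1)"
proof (induction k)
  case 0
  then show ?case by simp
next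
  case (Suc k)
  show ?case
  proof (cases "p = k")
    case True
    have "{k<..<Suc k} = {}" by auto
    then show ?thesis using True by simp
  next
    case False
    then have pk: "p < k" using Suc.prems by simp
    have "{p<..<Suc k} = insert k {p<..<k}" using pk by auto
    then have "(\<Sum>i\<in>{p<..<Suc k}. Q (i - 1) - Q i) = (Q (k - 1) - Q k) + (\<Sum>i\<in>{p<..<k}. Q (i - 1) - Q i)"
      by simp
    then show ?thesis using Suc.IH[OF pk] by simp
  qed
qed

lemma cis_powi_nat: "cis a powi int m = cis (real m * a)"
  unfolding power_int_of_nat by (rule Complex.DeMoivre)

context tonn
begin

lemma Psi_ZL:
  assumes \<sigma>: "\<sigma> permutes {..<k}" and f: "f \<in> cell n k L x \<sigma>"
  shows "Psi n k L x \<sigma> f \<in> ZL k (\<lambda>m. int (L m))"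
proof -
  have t: "Psi n k L x \<sigma> f \<in> torus k" unfolding Psi_def torus_def by simp
  have "chi k (\<lambda>m. int (L m)) (Psi n k L x \<sigma> f) = (\<Prod>m<k. cis (real (L m) * (2 * pi * psi n k L x \<sigma> f m)))"
    unfolding chi_def Psi_def by (intro prod.cong refl) (simp only: lessThan_iff if_P cis_powi_nat)
  also have "\<dots> = cis (\<Sum>m<k. real (L m) * (2 * pi * psi n k L x \<sigma> f m))"
    by (simp add: cis_prod)
  also have "(\<Sum>m<k. real (L m) * (2 * pi * psi n k L x \<sigma> f m)) = 2 * pi * of_int (- int x)"
  proof -
    have "(\<Sum>m<k. real (L m) * (2 * pi * psi n k L x \<sigma> f m)) = 2 * pi * (\<Sum>m<k. real (L m) * psi n k L x \<sigma> f m)"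
      by (simp add: sum_distrib_left mult.left_commute)
    then show ?thesis using psi_Lsum[of x \<sigma> f] by simp
  qed
  also have "cis \<dots> = 1" by (rule cis_int)
  finally show ?thesis using t unfolding ZL_def by simp
qed


lemma surj:
  assumes z: "z \<in> ZL k (\<lambda>m. int (L m))"
  shows "\<exists>x \<sigma> f. x < n \<and> \<sigma> permutes {..<k} \<and> f \<in> cell n k L x \<sigma> \<and> Psi n k L x \<sigma> f = z"
proof -
  have zt: "z \<in> torus k" and chi1: "chi k (\<lambda>m. int (L m)) z = 1" using z unfolding ZL_def by auto
  have "\<forall>m. \<exists>\<theta>. m < k \<longrightarrow> 0 \<le> \<theta> \<and> \<theta> < 1 \<and> z m = cis (2 * pi * \<theta>)"
  proof
    fix m
    show "\<exists>\<theta>. m < k \<longrightarrow> 0 \<le> \<theta> \<and> \<theta> < 1 \<and> z m = cis (2 * pi * \<theta>)"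
    proof (cases "m < k")
      case True
      then show ?thesis using unit_cis[OF torus_norm[OF zt True]] by blast
    qed blast
  qed
  from choice[OF this] obtain \<theta> where \<theta>0: "\<forall>m. m < k \<longrightarrow> 0 \<le> \<theta> m \<and> \<theta> m < 1 \<and> z m = cis (2 * pi * \<theta> m)"
    by blast
  then have \<theta>: "\<And>m. m < k \<Longrightarrow> 0 \<le> \<theta> m \<and> \<theta> m < 1 \<and> z m = cis (2 * pi * \<theta> m)"
    by blast
  have "chi k (\<lambda>m. int (L m)) z = (\<Prod>m<k. cis (real (L m) * (2 * pi * \<theta> m)))"
    unfolding chi_def by (intro prod.cong refl) (simp only: lessThan_iff \<theta> cis_powi_nat)
  also have "\<dots> = cis (\<Sum>m<k. real (L m) * (2 * pi * \<theta> m))" by (simp add: cis_prod)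
  also have "(\<Sum>m<k. real (L m) * (2 * pi * \<theta> m)) = 2 * pi * (\<Sum>m<k. real (L m) * \<theta> m)"
    by (simp add: sum_distrib_left mult.left_commute)
  finally have "cis (2 * pi * (\<Sum>m<k. real (L m) * \<theta> m)) = cis (2 * pi * 0)" using chi1 by simp
  from cis_eq_int[OF this] obtain N0 :: int where N0: "(\<Sum>m<k. real (L m) * \<theta> m) = of_int N0" by auto
  obtain \<sigma> where \<sigma>: "\<sigma> permutes {..<k}" and sorted: "\<And>a b. a \<le> b \<Longrightarrow> b < k \<Longrightarrow> \<theta> (\<sigma> b) \<le> \<theta> (\<sigma> a)"
    using sort_perm[of k \<theta>] by blast
  have \<sigma>k: "\<sigma> p < k" if "p < k" for p using permutes_in_image[OF \<sigma>] that by simp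
  define c where "c = \<theta> (\<sigma> (k - 1))"
  define Q where "Q p = \<theta> (\<sigma> p) - c" for p
  define t where "t i = (if i = 0 then 1 - Q 0 else Q (i - 1) - Q i)" for i
  define x where "x = nat ((- N0) mod int n)"
  have nn: "int n > 0" using npos by simp
  have xi: "int x = (- N0) mod int n" unfolding x_def using nn by simp
  have "int x < int n" unfolding xi using nn by (rule pos_mod_bound)
  then have xn: "x < n" by simp
  define f where "f v = (\<Sum>i\<in>{i. i < k \<and> vert n L x \<sigma> i = v}. t i)" for v
  have k1: "k - 1 < k" using k2 by simp
  have Qk: "Q (k - 1) = 0" unfolding Q_def c_def by simp
  have tnn: "0 \<le> t i" if "i < k" for i
  proof (cases "i = 0")
    case True
    have "\<theta> (\<sigma> 0) < 1" "0 \<le> c" using \<theta> \<sigma>k k2 k1 unfolding c_def by auto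
    then show ?thesis using True unfolding t_def Q_def by simp
  next
    case False
    then show ?thesis using sorted[of "i - 1" i] that unfolding t_def Q_def by simp
  qed
  have fv: "f (vert n L x \<sigma> j) = t j" if "j < k" for j
  proof -
    have "{i. i < k \<and> vert n L x \<sigma> i = vert n L x \<sigma> j} = {j}"
      using vert_inj[OF \<sigma>, of x] that unfolding inj_on_def by auto
    then show ?thesis unfolding f_def by simp
  qed
  have f0: "f v = 0" if "v \<notin> vert n L x \<sigma> ` {..<k}" for v
  proof -
    have e: "{i. i < k \<and> vert n L x \<sigma> i = v} = {}" using that by auto
    show ?thesis unfolding f_def by (simp only: e sum.empty)
  qed
  have fnn: "0 \<le> f v" for v unfolding f_def using tnn by (intro sum_nonneg) auto
  have tsum: "(\<Sum>i<k. t i) = 1"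
  proof -
    have "{..<k} = insert 0 {0<..<k}" using k2 by auto
    then have "(\<Sum>i<k. t i) = t 0 + (\<Sum>i\<in>{0<..<k}. t i)" by simp
    also have "(\<Sum>i\<in>{0<..<k}. t i) = (\<Sum>i\<in>{0<..<k}. Q (i - 1) - Q i)"
      unfolding t_def by (intro sum.cong refl) auto
    also have "\<dots> = Q 0 - Q (k - 1)" using tele[of 0 k Q] k2 by simp
    finally show ?thesis using Qk unfolding t_def by simp
  qed
  have fcell: "f \<in> cell n k L x \<sigma>"
  proof -
    have "sum f (vert n L x \<sigma> ` {..<k}) = (\<Sum>i<k. f (vert n L x \<sigma> i))"
      using sum.reindex[OF vert_inj[OF \<sigma>, of x], of f] by simp
    also have "\<dots> = 1" using fv tsum by simp
    finally show ?thesis unfolding cell_def simplex_eq using fnn f0 by auto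
  qed
  have qvm: "qv n k L x \<sigma> f m = \<theta> m - c" if "m < k" for m
  proof -
    define p where "p = inv \<sigma> m"
    have p: "p < k" "\<sigma> p = m"
      using permutes_in_image[OF permutes_inv[OF \<sigma>]] that permutes_inverses(1)[OF \<sigma>]
      unfolding p_def by auto
    have "qv n k L x \<sigma> f (\<sigma> p) = Qp (\<lambda>i. f (vert n L x \<sigma> i)) k p" using qv_pos[OF \<sigma> p(1)] .
    also have "\<dots> = (\<Sum>i\<in>{p<..<k}. Q (i - 1) - Q i)"
      unfolding Qp_def using fv unfolding t_def by (intro sum.cong refl) auto
    also have "\<dots> = Q p" using tele[OF p(1)] Qk by simp
    finally show ?thesis using p unfolding Q_def by simp
  qed
  have A: "(\<Sum>m'<k. real (L m') * qv n k L x \<sigma> f m') = of_int N0 - c * real n"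
  proof -
    have "(\<Sum>m'<k. real (L m') * qv n k L x \<sigma> f m') = (\<Sum>m'<k. real (L m') * \<theta> m' - real (L m') * c)"
      using qvm by (intro sum.cong refl) (simp add: right_diff_distrib)
    also have "\<dots> = of_int N0 - (\<Sum>m'<k. real (L m')) * c"
      using N0 by (simp add: sum_subtractf sum_distrib_right)
    also have "(\<Sum>m'<k. real (L m')) = real n" using Lsum by (metis of_nat_sum)
    finally show ?thesis by simp
  qed
  obtain W where W: "N0 + int x = int n * W"
  proof -
    have "(N0 + int x) mod int n = 0" unfolding xi by (simp add: mod_add_right_eq)
    then have "int n dvd N0 + int x" by (rule mod_0_imp_dvd)
    then show ?thesis using that by (elim dvdE) blast
  qed
  have pm: "psi n k L x \<sigma> f m = \<theta> m - of_int W" if "m < k" for m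
  proof -
    have wr: "real_of_int N0 + real x = real n * of_int W" using arg_cong[OF W, of real_of_int] by simp
    have "(\<Sum>m'<k. real (L m') * qv n k L x \<sigma> f m') + real x = real n * (of_int W - c)"
      using A wr by (simp add: right_diff_distrib mult.commute)
    then have "((\<Sum>m'<k. real (L m') * qv n k L x \<sigma> f m') + real x) / real n = of_int W - c"
      using npos by simp
    then show ?thesis unfolding psi_def using qvm[OF that] by simp
  qed
  have "Psi n k L x \<sigma> f = z"
  proof
    fix m
    show "Psi n k L x \<sigma> f m = z m"
    proof (cases "m < k")
      case True
      have "cis (2 * pi * psi n k L x \<sigma> f m) = cis (2 * pi * \<theta> m) / cis (2 * pi * of_int W)"
        unfolding pm[OF True] by (simp only: cis_divide right_diff_distrib)
      then show ?thesis unfolding Psi_def using True \<theta>[OF True] cis_int by simp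
    next
      case False
      then show ?thesis using zt unfolding Psi_def torus_def by simp
    qed
  qed
  then show ?thesis using xn \<sigma> fcell by blast
qed

end



context tonn
begin

lemma Psi_cont: "continuous_on S (Psi n k L x \<sigma>)"
  unfolding Psi_def
proof (intro continuous_on_coordinatewise_then_product)
  fix m
  show "continuous_on S (\<lambda>f. if m < k then cis (2 * pi * psi n k L x \<sigma> f m) else 0)"
  proof (cases "m < k")
    case True
    have "continuous_on S (\<lambda>f. qv n k L x \<sigma> f m')" for m'
      unfolding qv_def by (intro continuous_on_sum continuous_on_mult continuous_on_const coord_cont)
    then have "continuous_on S (\<lambda>f. psi n k L x \<sigma> f m)"
      unfolding psi_def
      by (intro continuous_on_diff continuous_on_divide continuous_on_add continuous_on_sum
          continuous_on_mult continuous_on_const) (use npos in auto)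
    then show ?thesis using True by (simp add: continuous_on_cis continuous_on_mult continuous_on_const)
  qed simp
qed

lemma cell_closed: "closed (cell n k L x \<sigma>)"
proof -
  let ?S = "tonnetz_simplex n k L x \<sigma>"
  have "cell n k L x \<sigma> = (\<Inter>v. {f. 0 \<le> f v}) \<inter> (\<Inter>v\<in>-?S. {f. f v = 0}) \<inter> {f. sum f ?S = 1}"
    unfolding cell_def by auto
  moreover have "closed (\<Inter>v. {f::nat\<Rightarrow>real. 0 \<le> f v})"
    by (intro closed_INT ballI closed_Collect_le continuous_on_const coord_cont)
  moreover have "closed (\<Inter>v\<in>-?S. {f::nat\<Rightarrow>real. f v = 0})"
    by (intro closed_INT ballI closed_Collect_eq continuous_on_const coord_cont)
  moreover have "closed {f::nat\<Rightarrow>real. sum f ?S = 1}"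
    by (intro closed_Collect_eq continuous_on_const continuous_on_sum coord_cont)
  ultimately show ?thesis by (metis closed_Int)
qed

lemma box_compact: "compact (PiE UNIV (\<lambda>_::nat. {0..1::real}))"
proof -
  have "compactin (product_topology (\<lambda>_. euclidean) UNIV) (PiE UNIV (\<lambda>_::nat. {0..1::real}))"
    by (simp add: compactin_PiE compactin_euclidean_iff)
  then show ?thesis by (simp add: euclidean_product_topology compactin_euclidean_iff)
qed

lemma cell_compact: "compact (cell n k L x \<sigma>)"
proof -
  let ?S = "tonnetz_simplex n k L x \<sigma>"
  have fin: "finite ?S" unfolding simplex_eq by simp
  have "cell n k L x \<sigma> \<subseteq> PiE UNIV (\<lambda>_::nat. {0..1::real})"
  proof
    fix f assume f: "f \<in> cell n k L x \<sigma>"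
    have "f v \<in> {0..1}" for v
    proof (cases "v \<in> ?S")
      case True
      have "f v \<le> sum f ?S" using f fin True unfolding cell_def by (intro member_le_sum) auto
      then show ?thesis using f unfolding cell_def by auto
    next
      case False
      then show ?thesis using f unfolding cell_def by auto
    qed
    then show "f \<in> PiE UNIV (\<lambda>_::nat. {0..1::real})" by auto
  qed
  then have "cell n k L x \<sigma> = PiE UNIV (\<lambda>_::nat. {0..1::real}) \<inter> cell n k L x \<sigma>" by blast
  then show ?thesis using compact_Int_closed[OF box_compact cell_closed] by metis
qed

definition PP :: "(nat \<times> (nat \<Rightarrow> nat)) set" where
  "PP = {..<n} \<times> {\<sigma>. \<sigma> permutes {..<k}}"

lemma PP_finite: "finite PP"
  unfolding PP_def by (simp add: finite_permutations)

lemma realization_eq: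
  "geometric_realization (tonnetz n k L) = (\<Union>p\<in>PP. cell n k L (fst p) (snd p))"
proof
  show "geometric_realization (tonnetz n k L) \<subseteq> (\<Union>p\<in>PP. cell n k L (fst p) (snd p))"
  proof
    fix f assume "f \<in> geometric_realization (tonnetz n k L)"
    then obtain S where S: "S \<in> tonnetz n k L" "finite S" "\<forall>v. 0 \<le> f v" "\<forall>v. v \<notin> S \<longrightarrow> f v = 0"
      "sum f S = 1" unfolding geometric_realization_def by blast
    then obtain x \<sigma> where x\<sigma>: "x < n" "\<sigma> permutes {..<k}" "S \<subseteq> tonnetz_simplex n k L x \<sigma>"
      unfolding tonnetz_def by blast
    have fin: "finite (tonnetz_simplex n k L x \<sigma>)" unfolding simplex_eq by simp
    have "sum f (tonnetz_simplex n k L x \<sigma>) = sum f S"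
      by (rule sum.mono_neutral_right[OF fin x\<sigma>(3)]) (use S in auto)
    then have "f \<in> cell n k L x \<sigma>" unfolding cell_def using S x\<sigma> by auto
    moreover have "(x, \<sigma>) \<in> PP" unfolding PP_def using x\<sigma> by auto
    ultimately show "f \<in> (\<Union>p\<in>PP. cell n k L (fst p) (snd p))" by force
  qed
  show "(\<Union>p\<in>PP. cell n k L (fst p) (snd p)) \<subseteq> geometric_realization (tonnetz n k L)"
  proof
    fix f assume "f \<in> (\<Union>p\<in>PP. cell n k L (fst p) (snd p))"
    then obtain x \<sigma> where x\<sigma>: "x < n" "\<sigma> permutes {..<k}" "f \<in> cell n k L x \<sigma>"
      unfolding PP_def by auto
    have "tonnetz_simplex n k L x \<sigma> \<in> tonnetz n k L" unfolding tonnetz_def using x\<sigma> by auto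
    moreover have "finite (tonnetz_simplex n k L x \<sigma>)" unfolding simplex_eq by simp
    ultimately show "f \<in> geometric_realization (tonnetz n k L)"
      using x\<sigma>(3) unfolding geometric_realization_def cell_def by blast
  qed
qed

end



context tonn
begin

lemma real_homeo_ZL: "geometric_realization (tonnetz n k L) homeomorphic ZL k (\<lambda>m. int (L m))"
proof -
  define R where "R = (\<Union>p\<in>PP. cell n k L (fst p) (snd p))"
  define sel where "sel f = (SOME p. p \<in> PP \<and> f \<in> cell n k L (fst p) (snd p))" for f
  define \<Phi> where "\<Phi> f = Psi n k L (fst (sel f)) (snd (sel f)) f" for f
  have PPD: "p \<in> PP \<Longrightarrow> fst p < n \<and> snd p permutes {..<k}" for p unfolding PP_def by auto
  have agree: "\<Phi> f = Psi n k L (fst p) (snd p) f" if "p \<in> PP" "f \<in> cell n k L (fst p) (snd p)" for f p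
  proof -
    have "sel f \<in> PP \<and> f \<in> cell n k L (fst (sel f)) (snd (sel f))"
      unfolding sel_def using someI[where P = "\<lambda>p. p \<in> PP \<and> f \<in> cell n k L (fst p) (snd p)" and x = p] that
      by blast
    then show ?thesis unfolding \<Phi>_def
      using wd[of "snd (sel f)" "snd p" f "fst (sel f)" "fst p"] PPD that by blast
  qed
  have cont: "continuous_on R \<Phi>"
    unfolding R_def
  proof (rule continuous_on_closed_Union[OF PP_finite])
    fix p assume p: "p \<in> PP"
    show "closed (cell n k L (fst p) (snd p))" by (rule cell_closed)
    show "continuous_on (cell n k L (fst p) (snd p)) \<Phi>"
      using Psi_cont by (rule continuous_on_cong[THEN iffD1, rotated 2]) (use agree p in auto)
  qed
  have comp: "compact R" unfolding R_def using PP_finite cell_compact by blast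
  have img: "\<Phi> ` R = ZL k (\<lambda>m. int (L m))"
  proof
    show "\<Phi> ` R \<subseteq> ZL k (\<lambda>m. int (L m))"
    proof
      fix y assume "y \<in> \<Phi> ` R"
      then obtain f p where "p \<in> PP" "f \<in> cell n k L (fst p) (snd p)" "y = \<Phi> f"
        unfolding R_def by blast
      then show "y \<in> ZL k (\<lambda>m. int (L m))" using agree Psi_ZL PPD by metis
    qed
    show "ZL k (\<lambda>m. int (L m)) \<subseteq> \<Phi> ` R"
    proof
      fix z assume "z \<in> ZL k (\<lambda>m. int (L m))"
      from surj[OF this] obtain x \<sigma> f where xf: "x < n" "\<sigma> permutes {..<k}" "f \<in> cell n k L x \<sigma>"
        "Psi n k L x \<sigma> f = z" by blast
      have p: "(x, \<sigma>) \<in> PP" unfolding PP_def using xf by auto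
      then have "f \<in> R" unfolding R_def using xf by force
      moreover have "\<Phi> f = z" using agree[OF p] xf by simp
      ultimately show "z \<in> \<Phi> ` R" by blast
    qed
  qed
  have inj: "inj_on \<Phi> R"
  proof
    fix f g assume "f \<in> R" "g \<in> R" and eq: "\<Phi> f = \<Phi> g"
    then obtain p q where pq: "p \<in> PP" "f \<in> cell n k L (fst p) (snd p)" "q \<in> PP" "g \<in> cell n k L (fst q) (snd q)"
      unfolding R_def by blast
    have "Psi n k L (fst p) (snd p) f = Psi n k L (fst q) (snd q) g"
      using eq agree pq by metis
    then show "f = g" using inj_cells PPD pq by blast
  qed
  obtain g where "homeomorphism R (ZL k (\<lambda>m. int (L m))) \<Phi> g"
    using homeomorphism_compact[OF comp cont img inj] by blast
  then show ?thesis unfolding realization_eq R_def[symmetric] homeomorphic_def by blast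
qed

end

theorem theorem1p2:
  fixes n k :: nat and L :: "nat \<Rightarrow> nat"
  assumes "k \<ge> 2"
    and "\<forall>i<k. L i > 0"
    and "(\<Sum>i<k. L i) = n"
    and "generic k L"
    and "reduced k L"
  shows "geometric_realization (tonnetz n k L) homeomorphic torus (k - 1)"
proof -
  interpret tonn n k L using assms by unfold_locales auto
  obtain w where w: "(\<Sum>m<k. int (L m) * w m) = int (Gcd (L ` {..<k}))" using bez by blast
  then have w1: "(\<Sum>m<k. int (L m) * w m) = 1" using assms(5) unfolding reduced_def by simp
  have k1: "k \<ge> 1" using assms(1) by simp
  have "ZL k (\<lambda>m. int (L m)) homeomorphic {z\<in>torus k. z 0 = 1}"
    using ZL_reduce[OF k1 w1] .
  also have "\<dots> homeomorphic torus (k - 1)" using torus_shift[OF k1] .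
  finally have "ZL k (\<lambda>m. int (L m)) homeomorphic torus (k - 1)" .
  then show ?thesis using real_homeo_ZL homeomorphic_trans by blast
qed


end
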